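(* Let $\beta>0$, $0<c_1,\dots,c_p<1$ pairwise distinct, $\vec n\in\mathbb N_0^p$, $i\in\{1,\dots,p\}$ with $n_i\ge1$. The type I multiple Meixner polynomials of the first kind are $$M^{(i)}_{1:\vec n}(x;\beta,\vec c)=\frac{(-1)^{n_i-1}(1-c_i)^{|\vec n|-1+\beta}}{(n_i-1)!(\beta)_{|\vec n|-n_i}c_i^{n_i-1}}\prod_{q\ne i}\Big(\frac{1-c_q}{c_i-c_q}\Big)^{n_q}\sum_{\ell_1,\dots,\ell_p\ge0}\frac{(-n_i+1)_{L}}{(\beta+|\vec n|-n_i)_{L}}(x+\beta)_{\ell_i}\frac{(1-c_i)^{\ell_i}}{\ell_i!}\prod_{q\ne i}(n_q)_{\ell_q}\frac{1}{\ell_q!}\Big(\frac{(1-c_i)c_q}{c_q-c_i}\Big)^{\ell_q},$$ where $L=\ell_1+\cdots+\ell_p$ (the sum is finite since $(-n_i+1)_L=0$ for $L\ge n_i$).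
   Context: Weights $w_i(x)=\frac{\Gamma(\beta+x)}{\Gamma(\beta)\Gamma(x+1)}c_i^x$ on $\mathbb N_0$. Type I polynomials $M^{(1)}_{1:\vec n},\dots,M^{(p)}_{1:\vec n}$: $\deg M^{(i)}_{1:\vec n}\le n_i-1$ (zero if $n_i=0$), $\sum_i\sum_{k\ge0}k^jM^{(i)}_{1:\vec n}(k)w_i(k)=0$ for $0\le j\le|\vec n|-2$, $=1$ for $j=|\vec n|-1$. $(a)_m$ Pochhammer symbol. *)

theory Defs
  imports "HOL-Analysis.Analysis" "HOL-Computational_Algebra.Polynomial"
begin

definition meixner_weight :: "real \<Rightarrow> real \<Rightarrow> nat \<Rightarrow> real" where
  "meixner_weight \<beta> c x = Gamma (\<beta> + real x) / (Gamma \<beta> * Gamma (real x + 1)) * c ^ x"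

definition msize :: "nat \<Rightarrow> (nat \<Rightarrow> nat) \<Rightarrow> nat" where
  "msize p n = (\<Sum>q=1..p. n q)"

definition is_typeI :: "nat \<Rightarrow> real \<Rightarrow> (nat \<Rightarrow> real) \<Rightarrow> (nat \<Rightarrow> nat) \<Rightarrow> (nat \<Rightarrow> real poly) \<Rightarrow> bool" where
  "is_typeI p \<beta> c n M \<longleftrightarrow>
     (\<forall>i\<in>{1..p}. (n i = 0 \<longrightarrow> M i = 0) \<and> (n i \<ge> 1 \<longrightarrow> degree (M i) \<le> n i - 1)) \<and>
     (\<forall>j < msize p n.
        (\<lambda>k. \<Sum>i=1..p. real k ^ j * poly (M i) (real k) * meixner_weight \<beta> (c i) k)
          sums (if j = msize p n - 1 then 1 else 0))"

text \<open>Explicit formula (the sum over l_1..l_p is restricted to l_q < n_i, which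
  contains every nonzero term since (-n_i+1)_L = 0 for L >= n_i).\<close>
definition meixner_typeI_formula ::
  "nat \<Rightarrow> real \<Rightarrow> (nat \<Rightarrow> real) \<Rightarrow> (nat \<Rightarrow> nat) \<Rightarrow> nat \<Rightarrow> real \<Rightarrow> real" where
  "meixner_typeI_formula p \<beta> c n i x =
    (-1) ^ (n i - 1) * (1 - c i) powr (real (msize p n) - 1 + \<beta>)
    / (fact (n i - 1) * pochhammer \<beta> (msize p n - n i) * c i ^ (n i - 1))
    * (\<Prod>q\<in>{1..p}-{i}. ((1 - c q) / (c i - c q)) ^ n q)
    * (\<Sum>l\<in>PiE {1..p} (\<lambda>_. {0..<n i}).
         pochhammer (1 - real (n i)) (\<Sum>q=1..p. l q)
         / pochhammer (\<beta> + real (msize p n) - real (n i)) (\<Sum>q=1..p. l q)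
         * pochhammer (x + \<beta>) (l i) * (1 - c i) ^ l i / fact (l i)
         * (\<Prod>q\<in>{1..p}-{i}. pochhammer (real (n q)) (l q) / fact (l q)
              * ((1 - c i) * c q / (c q - c i)) ^ l q))"

end

theory Submission
  imports Defs "HOL-Computational_Algebra.Formal_Power_Series"
begin


definition ff :: "nat \<Rightarrow> real \<Rightarrow> real" where
  "ff r x = (\<Prod>t<r. x - real t)"

lemma weight_eq:
  assumes "\<beta> > 0"
  shows "meixner_weight \<beta> c k = pochhammer \<beta> k / fact k * c ^ k"
proof -
  have nz: "\<beta> \<notin> \<int>\<^sub>\<le>\<^sub>0" using assms by (auto elim!: nonpos_Ints_cases)
  have "Gamma (\<beta> + real k) = pochhammer \<beta> k * Gamma \<beta>"
    using pochhammer_Gamma[OF nz, of k] Gamma_eq_zero_iff[of \<beta>] nz by auto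
  moreover have "Gamma (real k + 1) = fact k" using Gamma_fact[of k] by (simp add: add.commute)
  moreover have "Gamma \<beta> \<noteq> 0" using nz by (simp add: Gamma_eq_zero_iff)
  ultimately show ?thesis unfolding meixner_weight_def by (simp add: field_simps)
qed

lemma binom_series:
  fixes z a :: real
  assumes "\<bar>z\<bar> < 1"
  shows "(\<lambda>s. pochhammer a s / fact s * z ^ s) sums (1 - z) powr (- a)"
proof -
  have "\<bar>-z\<bar> < 1" using assms by simp
  from gen_binomial_real[OF this, of "-a"]
  have "(\<lambda>s. ((- a) gchoose s) * (- z) ^ s) sums (1 + - z) powr (- a)" .
  moreover have "((- a) gchoose s) * (- z) ^ s = pochhammer a s / fact s * z ^ s" for s
    by (simp add: gbinomial_pochhammer power_mult_distrib[symmetric])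
  ultimately show ?thesis by simp
qed

lemma ff_small: "k < r \<Longrightarrow> ff r (real k) = 0"
  unfolding ff_def by (rule prod_zero) auto

lemma ff_shift: "ff r (real (s + r)) = fact (s + r) / fact s"
proof (induction r arbitrary: s)
  case 0 then show ?case by (simp add: ff_def)
next
  case (Suc r)
  have "ff (Suc r) (real (s + Suc r)) = (\<Prod>t<r. real (s + Suc r) - real t) * (real (s + Suc r) - real r)"
    by (simp add: ff_def)
  also have "(\<Prod>t<r. real (s + Suc r) - real t) = ff r (real (Suc s + r))"
    by (simp add: ff_def)
  also have "\<dots> = fact (Suc s + r) / fact (Suc s)" using Suc.IH[of "Suc s"] by simp
  finally have "ff (Suc r) (real (s + Suc r)) = fact (Suc s + r) / fact (Suc s) * (real (s + Suc r) - real r)" .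
  moreover have "fact (Suc s + r) / fact (Suc s) * (real (s + Suc r) - real r) = (fact (s + Suc r) / fact s :: real)"
  proof -
    have a: "real (s + Suc r) - real r = real s + 1" by simp
    have b: "(fact (Suc s)::real) = (real s + 1) * fact s" by simp
    have c: "Suc s + r = s + Suc r" by simp
    have d: "real s + 1 \<noteq> 0" "(fact s::real) \<noteq> 0" by auto
    have e: "\<And>X. X / ((real s + 1) * fact s) * (real s + 1) = X / (fact s :: real)"
      using d by (simp add: divide_simps)
    show ?thesis unfolding a b c by (rule e)
  qed
  ultimately show ?case by simp
qed

lemma ff_shift': "ff r (real s + real r) = fact (s + r) / fact s"
  using ff_shift[of r s] by simp

lemma moment_basic:
  assumes "\<beta> > 0" "0 < c" "c < 1"
  shows "(\<lambda>k. ff r (real k) * pochhammer (real k + \<beta>) m * meixner_weight \<beta> c k) sums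
          (pochhammer \<beta> (r + m) * c ^ r * (1 - c) powr (- (\<beta> + real r + real m)))"
proof -
  let ?f = "\<lambda>k. ff r (real k) * pochhammer (real k + \<beta>) m * meixner_weight \<beta> c k"
  have "(\<lambda>s. pochhammer \<beta> (r + m) * c ^ r * (pochhammer (\<beta> + real r + real m) s / fact s * c ^ s)) sums
        (pochhammer \<beta> (r + m) * c ^ r * (1 - c) powr (- (\<beta> + real r + real m)))"
    using assms by (intro sums_mult binom_series) auto
  moreover have "?f (s + r) = pochhammer \<beta> (r + m) * c ^ r * (pochhammer (\<beta> + real r + real m) s / fact s * c ^ s)" for s
  proof -
    have "pochhammer \<beta> (s + r) * pochhammer (real (s + r) + \<beta>) m = pochhammer \<beta> ((s + r) + m)"
      using pochhammer_product'[of \<beta> "s + r" m] by (simp add: add.commute)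
    also have "(s + r) + m = (r + m) + s" by simp
    also have "pochhammer \<beta> ((r + m) + s) = pochhammer \<beta> (r + m) * pochhammer (\<beta> + real r + real m) s"
      using pochhammer_product'[of \<beta> "r + m" s] by (simp add: add_ac)
    finally have e: "pochhammer \<beta> (s + r) * pochhammer (real (s + r) + \<beta>) m =
       pochhammer \<beta> (r + m) * pochhammer (\<beta> + real r + real m) s" .
    have "?f (s + r) = fact (s + r) / fact s * pochhammer (real (s + r) + \<beta>) m * (pochhammer \<beta> (s + r) / fact (s + r) * c ^ (s + r))"
      using assms by (simp add: weight_eq ff_shift')
    also have "\<dots> = (pochhammer \<beta> (s + r) * pochhammer (real (s + r) + \<beta>) m) / fact s * c ^ s * c ^ r"
      by (simp add: power_add field_simps)
    also have "\<dots> = pochhammer \<beta> (r + m) * c ^ r * (pochhammer (\<beta> + real r + real m) s / fact s * c ^ s)"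
      unfolding e by (simp add: field_simps)
    finally show ?thesis .
  qed
  ultimately have "(\<lambda>s. ?f (s + r)) sums (pochhammer \<beta> (r + m) * c ^ r * (1 - c) powr (- (\<beta> + real r + real m)))"
    by simp
  then have "?f sums (pochhammer \<beta> (r + m) * c ^ r * (1 - c) powr (- (\<beta> + real r + real m)) + (\<Sum>k<r. ?f k))"
    by (rule sums_iff_shift[of ?f r, THEN iffD1])
  moreover have "(\<Sum>k<r. ?f k) = 0" by (simp add: ff_small)
  ultimately show ?thesis by simp
qed



definition pb :: "real \<Rightarrow> nat \<Rightarrow> real poly" where
  "pb \<beta> m = pochhammer [:\<beta>, 1:] m"

lemma poly_pb: "poly (pb \<beta> m) x = pochhammer (x + \<beta>) m"
proof (induction m)
  case 0 then show ?case by (simp add: pb_def)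
next
  case (Suc m)
  have "pb \<beta> (Suc m) = pb \<beta> m * ([:\<beta>, 1:] + of_nat m)" by (simp add: pb_def pochhammer_Suc)
  then show ?case using Suc by (simp add: pochhammer_Suc algebra_simps)
qed

lemma pb_monic: "degree (pb \<beta> m) = m \<and> coeff (pb \<beta> m) m = 1"
proof (induction m)
  case 0 then show ?case by (simp add: pb_def)
next
  case (Suc m)
  have e: "pb \<beta> (Suc m) = pb \<beta> m * [:\<beta> + real m, 1:]"
    by (simp add: pb_def pochhammer_Suc of_nat_poly)
  have nz: "pb \<beta> m \<noteq> 0" using Suc by auto
  have "degree (pb \<beta> m * [:\<beta> + real m, 1:]) = degree (pb \<beta> m) + degree [:\<beta> + real m, 1:]"
    by (rule degree_mult_eq) (use nz in auto)
  then have "degree (pb \<beta> (Suc m)) = Suc m" unfolding e using Suc by simp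
  moreover have "lead_coeff (pb \<beta> (Suc m)) = 1"
  proof -
    have a: "lead_coeff [:\<beta> + real m, 1:] = 1" by simp
    have b: "lead_coeff (pb \<beta> m) = 1" using Suc by simp
    show ?thesis unfolding e using lead_coeff_mult[of "pb \<beta> m" "[:\<beta> + real m, 1:]"] a b by (metis mult_1)
  qed
  ultimately show ?case by metis
qed

definition FF :: "nat \<Rightarrow> real poly" where
  "FF r = (\<Prod>t<r. [:- real t, 1:])"

lemma poly_FF: "poly (FF r) x = ff r x"
  by (simp add: FF_def ff_def poly_prod)

lemma FF_monic: "degree (FF r) = r \<and> coeff (FF r) r = 1"
proof (induction r)
  case 0 then show ?case by (simp add: FF_def)
next
  case (Suc r)
  have e: "FF (Suc r) = FF r * [:- real r, 1:]" by (simp add: FF_def)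
  have nz: "FF r \<noteq> 0" using Suc by auto
  have "degree (FF r * [:- real r, 1:]) = degree (FF r) + degree [:- real r, 1:]"
    by (rule degree_mult_eq) (use nz in auto)
  then have "degree (FF (Suc r)) = Suc r" unfolding e using Suc by simp
  moreover have "lead_coeff (FF (Suc r)) = 1"
  proof -
    have a: "lead_coeff [:- real r, 1:] = 1" by simp
    have b: "lead_coeff (FF r) = 1" using Suc by simp
    show ?thesis unfolding e using lead_coeff_mult[of "FF r" "[:- real r, 1:]"] a b by (metis mult_1)
  qed
  ultimately show ?case by metis
qed

lemma basis_coeff_high:
  fixes Bs :: "nat \<Rightarrow> real poly"
  assumes "\<And>m. degree (Bs m) = m"
  shows "k \<ge> n \<Longrightarrow> coeff (\<Sum>m<n. smult (a m) (Bs m)) k = 0"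
proof -
  assume k: "k \<ge> n"
  have "coeff (Bs x) k = 0" if "x < n" for x
    by (rule coeff_eq_0) (use assms[of x] that k in simp)
  then show ?thesis by (auto simp: coeff_sum intro!: sum.neutral)
qed

lemma basis_coeff_top:
  fixes Bs :: "nat \<Rightarrow> real poly"
  assumes "\<And>m. degree (Bs m) = m \<and> coeff (Bs m) m = 1"
  shows "coeff (\<Sum>m<Suc n. smult (a m) (Bs m)) n = a n"
proof -
  have "coeff (\<Sum>m<n. smult (a m) (Bs m)) n = 0"
    by (rule basis_coeff_high) (use assms in auto)
  then show ?thesis using assms by simp
qed

lemma basis_rep:
  fixes Bs :: "nat \<Rightarrow> real poly"
  assumes "\<And>m. degree (Bs m) = m \<and> coeff (Bs m) m = 1"
  shows "D = 0 \<or> degree D < n \<Longrightarrow> \<exists>a. D = (\<Sum>m<n. smult (a m) (Bs m))"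
proof (induction n arbitrary: D)
  case 0 then show ?case by auto
next
  case (Suc n)
  let ?D = "D - smult (coeff D n) (Bs n)"
  have "?D = 0 \<or> degree ?D < n"
  proof (cases "?D = 0")
    case False
    have "degree ?D \<le> n"
      using Suc.prems assms[of n] by (intro degree_diff_le) (auto simp: degree_smult_le)
    moreover have "coeff ?D n = 0" using assms[of n] by simp
    ultimately have "degree ?D \<noteq> n \<or> ?D = 0" using leading_coeff_neq_0 by metis
    then show ?thesis using \<open>degree ?D \<le> n\<close> by auto
  qed simp
  then obtain a where a: "?D = (\<Sum>m<n. smult (a m) (Bs m))" using Suc.IH by blast
  define a' where "a' = a(n := coeff D n)"
  have "(\<Sum>m<n. smult (a' m) (Bs m)) = (\<Sum>m<n. smult (a m) (Bs m))"
    by (rule sum.cong) (auto simp: a'_def)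
  then have "D = (\<Sum>m<Suc n. smult (a' m) (Bs m))" using a by (simp add: a'_def algebra_simps)
  then show ?case by blast
qed

lemma basis_indep:
  fixes Bs :: "nat \<Rightarrow> real poly"
  assumes "\<And>m. degree (Bs m) = m \<and> coeff (Bs m) m = 1"
  shows "(\<Sum>m<n. smult (a m) (Bs m)) = 0 \<Longrightarrow> m < n \<Longrightarrow> a m = 0"
proof (induction n)
  case 0 then show ?case by simp
next
  case (Suc n)
  have "a n = 0" using basis_coeff_top[where Bs=Bs and n=n and a=a, OF assms] Suc.prems(1) by (metis coeff_0)
  then have "(\<Sum>m<n. smult (a m) (Bs m)) = 0" using Suc.prems(1) by simp
  then show ?case using Suc by (cases "m = n") (auto simp: \<open>a n = 0\<close>)
qed



definition sh :: "real poly \<Rightarrow> real poly" where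
  "sh Q = pcompose Q [:1, 1:]"

lemma poly_sh: "poly (sh Q) x = poly Q (x + 1)"
  by (simp add: sh_def poly_pcompose add.commute)

lemma sh_deg: "degree (sh Q) = degree Q" "lead_coeff (sh Q) = lead_coeff Q"
proof -
  show d: "degree (sh Q) = degree Q" by (simp add: sh_def degree_pcompose)
  have "lead_coeff (Q \<circ>\<^sub>p [:1, 1:]) = lead_coeff Q * lead_coeff [:1, 1:] ^ degree Q"
    by (rule lead_coeff_comp) simp
  then show "lead_coeff (sh Q) = lead_coeff Q" by (simp add: sh_def)
qed

lemma sh_diff:
  assumes "P \<noteq> 0"
  shows "sh P - P = 0 \<or> degree (sh P - P) < degree P"
proof (cases "sh P - P = 0")
  case False
  have "degree (sh P - P) \<le> degree P" using sh_deg by (metis degree_diff_le order_refl)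
  moreover have "coeff (sh P - P) (degree P) = 0" using sh_deg by (metis coeff_diff diff_self)
  ultimately have "degree (sh P - P) \<noteq> degree P"
    using False leading_coeff_neq_0 by metis
  then show ?thesis using \<open>degree (sh P - P) \<le> degree P\<close> by auto
qed simp

lemma periodic_const:
  assumes "sh P = P"
  shows "P = [:poly P 0:]"
proof (rule ccontr)
  let ?Q = "P - [:poly P 0:]"
  assume "P \<noteq> [:poly P 0:]"
  then have nz: "?Q \<noteq> 0" by simp
  have "poly P (real k) = poly P 0" for k
  proof (induction k)
    case (Suc k)
    have "poly P (real (Suc k)) = poly (sh P) (real k)" by (simp add: poly_sh add.commute)
    then show ?case using Suc assms by simp
  qed simp
  then have "range real \<subseteq> {x. poly ?Q x = 0}" by auto
  moreover have "infinite (range (real :: nat \<Rightarrow> real))"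
    using range_inj_infinite[of "real :: nat \<Rightarrow> real"] inj_of_nat by blast
  ultimately show False using poly_roots_finite[OF nz] finite_subset by blast
qed

lemma exppoly_unique_aux:
  fixes d :: "nat \<Rightarrow> real" and P :: "nat \<Rightarrow> real poly"
  assumes fin: "finite I" and inj: "inj_on d I" and nz: "\<forall>q\<in>I. d q \<noteq> 0"
  shows "sum n I = N \<Longrightarrow> (\<forall>q\<in>I. P q = 0 \<or> degree (P q) < n q) \<Longrightarrow>
     (\<forall>r<N. (\<Sum>q\<in>I. d q ^ r * poly (P q) (real r)) = 0) \<Longrightarrow> q \<in> I \<Longrightarrow> P q = 0"
proof (induction N arbitrary: n P q)
  case 0
  then have "n q = 0" using fin by auto
  then show ?case using 0 by auto
next
  case (Suc N)
  obtain p0 where p0: "p0 \<in> I" "n p0 \<ge> 1"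
    using Suc.prems(1) by (metis One_nat_def Suc_leI not_gr0 sum.neutral nat.distinct(1))
  define n' where "n' = n(p0 := n p0 - 1)"
  have sn': "sum n' I = N"
  proof -
    have "sum n I = n p0 + sum n (I - {p0})" using fin p0 by (simp add: sum.remove)
    moreover have "sum n' I = n' p0 + sum n' (I - {p0})" using fin p0 by (simp add: sum.remove)
    moreover have "sum n' (I - {p0}) = sum n (I - {p0})" by (rule sum.cong) (auto simp: n'_def)
    ultimately show ?thesis using Suc.prems(1) p0 by (simp add: n'_def)
  qed
  define P' where "P' q = smult (d q) (sh (P q)) - smult (d p0) (P q)" for q
  have polyP': "poly (P' q) x = d q * poly (P q) (x + 1) - d p0 * poly (P q) x" for q x
    by (simp add: P'_def poly_sh)
  have degP': "P' q = 0 \<or> degree (P' q) < n' q" if "q \<in> I" for q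
  proof (cases "P q = 0")
    case True then show ?thesis by (simp add: P'_def sh_def)
  next
    case False
    then have dq: "degree (P q) < n q" using Suc.prems(2) that by auto
    show ?thesis
    proof (cases "q = p0")
      case True
      have "P' q = smult (d p0) (sh (P q) - P q)" by (simp add: P'_def True smult_diff_right)
      then show ?thesis using sh_diff[OF False] dq True by (auto simp: n'_def)
    next
      case qF: False
      have "degree (P' q) \<le> degree (P q)" unfolding P'_def using sh_deg
        by (metis degree_diff_le degree_smult_le le_trans)
      then show ?thesis using dq qF by (simp add: n'_def)
    qed
  qed
  have hypP': "\<forall>r<N. (\<Sum>q\<in>I. d q ^ r * poly (P' q) (real r)) = 0"
  proof (intro allI impI)
    fix r assume r: "r < N"
    have "(\<Sum>q\<in>I. d q ^ r * poly (P' q) (real r)) =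
      (\<Sum>q\<in>I. d q ^ Suc r * poly (P q) (real (Suc r))) - d p0 * (\<Sum>q\<in>I. d q ^ r * poly (P q) (real r))"
      by (simp add: polyP' sum_distrib_left sum_subtractf algebra_simps)
    also have "\<dots> = 0"
    proof -
      have "(\<Sum>q\<in>I. d q ^ Suc r * poly (P q) (real (Suc r))) = 0" using Suc.prems(3) r Suc_mono by blast
      moreover have "(\<Sum>q\<in>I. d q ^ r * poly (P q) (real r)) = 0" using Suc.prems(3) r by simp
      ultimately show ?thesis by simp
    qed
    finally show "(\<Sum>q\<in>I. d q ^ r * poly (P' q) (real r)) = 0" .
  qed
  have P'0: "P' q = 0" if "q \<in> I" for q
    using Suc.IH[OF sn' _ hypP' that] degP' by blast
  have others: "P q = 0" if "q \<in> I" "q \<noteq> p0" for q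
  proof (rule ccontr)
    assume A: "P q \<noteq> 0"
    have "coeff (P' q) (degree (P q)) = (d q - d p0) * lead_coeff (P q)"
      using sh_deg[of "P q"] by (simp add: P'_def algebra_simps)
    moreover have "d q \<noteq> d p0" using inj that p0 by (auto dest: inj_onD)
    ultimately have "coeff (P' q) (degree (P q)) \<noteq> 0" using A by simp
    then show False using P'0[OF that(1)] by simp
  qed
  have "sh (P p0) = P p0"
  proof -
    have "smult (d p0) (sh (P p0) - P p0) = 0" using P'0[OF p0(1)] by (simp add: P'_def smult_diff_right)
    then show ?thesis using nz p0 by simp
  qed
  then have cst: "P p0 = [:poly (P p0) 0:]" by (rule periodic_const)
  have "(\<Sum>q\<in>I. d q ^ 0 * poly (P q) (real 0)) = poly (P p0) 0"
  proof -
    have "(\<Sum>q\<in>I. d q ^ 0 * poly (P q) (real 0)) = d p0 ^ 0 * poly (P p0) (real 0) + (\<Sum>q\<in>I - {p0}. d q ^ 0 * poly (P q) (real 0))"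
      using fin p0 by (simp add: sum.remove)
    also have "(\<Sum>q\<in>I - {p0}. d q ^ 0 * poly (P q) (real 0)) = 0"
      using others by (intro sum.neutral) auto
    finally show ?thesis by simp
  qed
  then have "poly (P p0) 0 = 0" using Suc.prems(3) by auto
  then have "P p0 = 0" using cst by simp
  then show ?case using others Suc.prems(4) by (cases "q = p0") auto
qed

lemma exppoly_unique:
  fixes d :: "nat \<Rightarrow> real" and P :: "nat \<Rightarrow> real poly"
  assumes "finite I" "inj_on d I" "\<forall>q\<in>I. d q \<noteq> 0"
    "\<forall>q\<in>I. P q = 0 \<or> degree (P q) < n q"
    "\<forall>r < sum n I. (\<Sum>q\<in>I. d q ^ r * poly (P q) (real r)) = 0"
    "q \<in> I"
  shows "P q = 0"
  using exppoly_unique_aux[OF assms(1-3) refl assms(4-6)] .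




lemma sum_swap_le: "(\<Sum>s\<le>(t::nat). \<Sum>l\<le>s. f s l) = (\<Sum>l\<le>t. \<Sum>s\<in>{l..t}. (f s l :: 'a::comm_monoid_add))"
proof (induction t)
  case 0 then show ?case by simp
next
  case (Suc t)
  have "(\<Sum>l\<le>Suc t. \<Sum>s\<in>{l..Suc t}. f s l) = (\<Sum>l\<le>t. \<Sum>s\<in>{l..Suc t}. f s l) + f (Suc t) (Suc t)"
    by simp
  also have "(\<Sum>l\<le>t. \<Sum>s\<in>{l..Suc t}. f s l) = (\<Sum>l\<le>t. (\<Sum>s\<in>{l..t}. f s l) + f (Suc t) l)"
    by (intro sum.cong refl) (simp add: sum.cl_ivl_Suc)
  finally show ?case using Suc by (simp add: sum.distrib add_ac)
qed

definition Eb :: "nat \<Rightarrow> real \<Rightarrow> real fps" where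
  "Eb n a = Abs_fps (\<lambda>s. ((- real n) gchoose s) * a ^ s)"

lemma Eb_nth: "fps_nth (Eb n a) s = ((- real n) gchoose s) * a ^ s"
  by (simp add: Eb_def)

lemma Eb_0: "Eb 0 a = 1"
  by (simp add: fps_eq_iff Eb_nth gbinomial_0_left)

lemma Eb_contig: "(1 + fps_const a * fps_X) * Eb (Suc n) a = Eb n a"
proof (rule fps_ext)
  fix s
  show "fps_nth ((1 + fps_const a * fps_X) * Eb (Suc n) a) s = fps_nth (Eb n a) s"
  proof (cases s)
    case 0 then show ?thesis by (simp add: Eb_nth)
  next
    case (Suc k)
    have "fps_nth ((1 + fps_const a * fps_X) * Eb (Suc n) a) s = fps_nth (Eb (Suc n) a) (Suc k) + a * fps_nth (Eb (Suc n) a) k"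
      by (simp add: Suc algebra_simps)
    also have "\<dots> = a ^ Suc k * (((- real (Suc n)) gchoose Suc k) + ((- real (Suc n)) gchoose k))"
      by (simp add: Eb_nth algebra_simps)
    also have "((- real (Suc n)) gchoose Suc k) + ((- real (Suc n)) gchoose k) = (- real n) gchoose Suc k"
      using gbinomial_Suc_Suc[of "- real (Suc n)" k] by (simp add: algebra_simps)
    finally show ?thesis by (simp add: Eb_nth Suc)
  qed
qed

lemma Eb_expand:
  "fps_nth (Eb n (1 - e)) s = (\<Sum>l\<le>s. pochhammer (real n) l / fact l * e ^ l * ((- real n - real l) gchoose (s - l)))"
proof -
  have "fps_nth (Eb n (1 - e)) s = ((- real n) gchoose s) * (\<Sum>l\<le>s. of_nat (s choose l) * (- e) ^ l * 1 ^ (s - l))"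
    using binomial_ring[of "- e" 1 s] by (simp add: Eb_nth)
  also have "\<dots> = (\<Sum>l\<le>s. ((- real n) gchoose s) * (of_nat s gchoose l) * (- e) ^ l)"
    by (simp add: sum_distrib_left binomial_gbinomial algebra_simps)
  also have "\<dots> = (\<Sum>l\<le>s. ((- real n) gchoose l) * ((- real n - real l) gchoose (s - l)) * (- e) ^ l)"
    by (intro sum.cong refl) (simp add: gbinomial_trinomial_revision)
  also have "\<dots> = (\<Sum>l\<le>s. pochhammer (real n) l / fact l * e ^ l * ((- real n - real l) gchoose (s - l)))"
  proof (intro sum.cong refl)
    fix l
    have "((- real n) gchoose l) = (- 1) ^ l * pochhammer (real n) l / fact l"
      by (simp add: gbinomial_pochhammer)
    moreover have "(- e) ^ l = (- 1) ^ l * e ^ l" by (simp add: power_mult_distrib[symmetric])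
    ultimately show "((- real n) gchoose l) * ((- real n - real l) gchoose (s - l)) * (- e) ^ l =
      pochhammer (real n) l / fact l * e ^ l * ((- real n - real l) gchoose (s - l))"
      by (simp add: power_mult_distrib[symmetric] algebra_simps)
  qed
  finally show ?thesis .
qed

lemma Eb_mult:
  "fps_nth (Eb n (1 - e) * F) t = (\<Sum>l\<le>t. pochhammer (real n) l / fact l * e ^ l *
      fps_nth (fps_binomial (- real n - real l) * F) (t - l))"
proof -
  have "fps_nth (Eb n (1 - e) * F) t = (\<Sum>s\<le>t. (\<Sum>l\<le>s. pochhammer (real n) l / fact l * e ^ l *
        ((- real n - real l) gchoose (s - l))) * fps_nth F (t - s))"
    by (simp add: fps_mult_nth Eb_expand atLeast0AtMost)
  also have "\<dots> = (\<Sum>s\<le>t. \<Sum>l\<le>s. pochhammer (real n) l / fact l * e ^ l *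
        (((- real n - real l) gchoose (s - l)) * fps_nth F (t - s)))"
    by (intro sum.cong refl, subst sum_distrib_right, intro sum.cong refl) (simp add: algebra_simps)
  also have "\<dots> = (\<Sum>l\<le>t. \<Sum>s\<in>{l..t}. pochhammer (real n) l / fact l * e ^ l *
        (((- real n - real l) gchoose (s - l)) * fps_nth F (t - s)))"
    by (rule sum_swap_le)
  also have "\<dots> = (\<Sum>l\<le>t. pochhammer (real n) l / fact l * e ^ l *
      fps_nth (fps_binomial (- real n - real l) * F) (t - l))"
  proof (intro sum.cong refl)
    fix l assume l: "l \<in> {..t}"
    have "fps_nth (fps_binomial (- real n - real l) * F) (t - l) =
        (\<Sum>j=0..t - l. ((- real n - real l) gchoose j) * fps_nth F (t - l - j))"
      by (simp add: fps_mult_nth)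
    also have "\<dots> = (\<Sum>s\<in>{l..t}. ((- real n - real l) gchoose (s - l)) * fps_nth F (t - s))"
      using l by (intro sum.reindex_bij_witness[of _ "\<lambda>s. s - l" "\<lambda>j. j + l"]) (auto simp: add.commute)
    finally show "(\<Sum>s\<in>{l..t}. pochhammer (real n) l / fact l * e ^ l *
        (((- real n - real l) gchoose (s - l)) * fps_nth F (t - s))) =
      pochhammer (real n) l / fact l * e ^ l * fps_nth (fps_binomial (- real n - real l) * F) (t - l)"
      by (simp add: sum_distrib_left)
  qed
  finally show ?thesis .
qed



definition ee :: "(nat \<Rightarrow> real) \<Rightarrow> nat \<Rightarrow> nat \<Rightarrow> real" where
  "ee d i q = d q / (d q - d i)"

definition Bn :: "nat set \<Rightarrow> (nat \<Rightarrow> real) \<Rightarrow> (nat \<Rightarrow> nat) \<Rightarrow> nat \<Rightarrow> real fps" where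
  "Bn I d n i = (\<Prod>q\<in>I-{i}. Eb (n q) (1 - ee d i q))"

definition Kc :: "nat set \<Rightarrow> (nat \<Rightarrow> real) \<Rightarrow> (nat \<Rightarrow> nat) \<Rightarrow> nat \<Rightarrow> real" where
  "Kc I d n i = (\<Prod>q\<in>I-{i}. (d i - d q) ^ n q)"

definition rho :: "nat set \<Rightarrow> (nat \<Rightarrow> real) \<Rightarrow> (nat \<Rightarrow> nat) \<Rightarrow> nat \<Rightarrow> nat \<Rightarrow> real" where
  "rho I d n i r = (if n i = 0 then 0 else
     d i ^ r / d i ^ (n i - 1) / Kc I d n i * fps_nth (fps_binomial (real r) * Bn I d n i) (n i - 1))"

definition uu :: "nat set \<Rightarrow> (nat \<Rightarrow> real) \<Rightarrow> (nat \<Rightarrow> nat) \<Rightarrow> nat \<Rightarrow> real" where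
  "uu I d n r = (\<Sum>i\<in>I. rho I d n i r)"

lemma fb_suc: "fps_binomial (real (Suc r)) = (1 + fps_X) * fps_binomial (real r :: real)"
proof -
  have "fps_binomial (real r + 1) = fps_binomial (real r) * fps_binomial (1::real)"
    by (rule fps_binomial_add_mult)
  moreover have "fps_binomial (1::real) = 1 + fps_X"
    using fps_binomial_of_nat[of 1, where 'a=real] by simp
  ultimately show ?thesis by (simp add: mult.commute add.commute)
qed

lemma fb_suc': "fps_binomial (1 + real r) = (1 + fps_X) * fps_binomial (real r :: real)"
  using fb_suc[of r] by simp

lemma fps_nth_const_mult: "fps_nth (fps_const (c::real) * G) m = c * fps_nth G m"
  by simp

lemma frac_cancel: "(b::real) \<noteq> 0 \<Longrightarrow> a / x / (b * c) * (b * y) = a / x / c * y"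
  by (cases "c = 0") (simp_all add: field_simps)

lemma rho_step:
  assumes "n i \<noteq> 0"
  shows "rho I d n i (Suc r) - c * rho I d n i r = d i ^ r / d i ^ (n i - 1) / Kc I d n i *
    (d i * fps_nth ((1 + fps_X) * (fps_binomial (real r) * Bn I d n i)) (n i - 1)
     - c * fps_nth (fps_binomial (real r) * Bn I d n i) (n i - 1))"
proof -
  define F1 where "F1 = fps_nth ((1 + fps_X) * (fps_binomial (real r) * Bn I d n i)) (n i - 1)"
  define F0 where "F0 = fps_nth (fps_binomial (real r) * Bn I d n i) (n i - 1)"
  have BS: "fps_binomial (real (Suc r)) * Bn I d n i = (1 + fps_X) * (fps_binomial (real r) * Bn I d n i)"
    by (simp only: fb_suc mult.assoc)
  have r1: "rho I d n i (Suc r) = d i ^ Suc r / d i ^ (n i - 1) / Kc I d n i * F1"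
    using assms unfolding rho_def BS F1_def[symmetric] by simp
  have r0: "rho I d n i r = d i ^ r / d i ^ (n i - 1) / Kc I d n i * F0"
    using assms unfolding rho_def F0_def[symmetric] by simp
  show ?thesis unfolding F1_def[symmetric] F0_def[symmetric] r1 r0
    by (simp add: divide_inverse algebra_simps)
qed

lemma frac2: "(x::real) \<noteq> 0 \<Longrightarrow> a / (x * y) / K * (x * F) = a / y / K * F"
  by (cases "K = 0"; cases "y = 0") (simp_all add: field_simps)

lemma rho_contig:
  assumes fin: "finite I" and inj: "inj_on d I" and nz: "\<forall>q\<in>I. d q \<noteq> 0"
    and p: "p \<in> I" "n p \<ge> 1" and i: "i \<in> I"
  shows "rho I d n i (Suc r) - d p * rho I d n i r = rho I d (n(p := n p - 1)) i r"
proof -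
  define n' where "n' = n(p := n p - 1)"
  define B where "B = fps_binomial (real r) * Bn I d n i"
  define m where "m = n i - 1"
  have nzi: "d i \<noteq> 0" using nz i by auto
  have BS: "fps_binomial (real (Suc r)) * Bn I d n i = (1 + fps_X) * B"
    by (simp add: B_def fb_suc' mult.assoc)
  show ?thesis
  proof (cases "i = p")
    case False
    have dip: "d i - d p \<noteq> 0" using inj False p i by (auto dest: inj_onD)
    obtain k where k: "n p = Suc k" using p by (cases "n p") auto
    have n'i: "n' i = n i" using False by (simp add: n'_def)
    show ?thesis
    proof (cases "n i = 0")
      case True then show ?thesis using n'i by (simp add: rho_def n'_def)
    next
      case ni: False
      define a where "a = 1 - ee d i p"
      define R where "R = (\<Prod>q\<in>I-{i}-{p}. Eb (n q) (1 - ee d i q))"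
      define KR where "KR = (\<Prod>q\<in>I-{i}-{p}. (d i - d q) ^ n q)"
      have pin: "p \<in> I - {i}" using p False by auto
      have Bn1: "Bn I d n i = Eb (Suc k) a * R"
        unfolding Bn_def R_def a_def using fin pin k by (simp add: prod.remove)
      have R': "R = (\<Prod>q\<in>I-{i}-{p}. Eb (n' q) (1 - ee d i q))"
        unfolding R_def by (intro prod.cong) (auto simp: n'_def)
      have Bn2: "Bn I d n' i = Eb k a * R"
        unfolding Bn_def R' a_def using fin pin k by (simp add: prod.remove n'_def)
      have KR': "KR = (\<Prod>q\<in>I-{i}-{p}. (d i - d q) ^ n' q)"
        unfolding KR_def by (intro prod.cong) (auto simp: n'_def)
      have K1: "Kc I d n i = (d i - d p) ^ Suc k * KR"
        unfolding Kc_def KR_def using fin pin k by (simp add: prod.remove)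
      have K2: "Kc I d n' i = (d i - d p) ^ k * KR"
        unfolding Kc_def KR' using fin pin k by (simp add: prod.remove n'_def)
      have KRnz: "KR \<noteq> 0" unfolding KR_def using inj i fin by (auto simp: prod_zero_iff dest: inj_onD)
      have lin: "fps_const (d i) * (1 + fps_X) - fps_const (d p) =
          fps_const (d i - d p) * (1 + fps_const a * fps_X)"
      proof -
        have "(d i - d p) * a = d i" unfolding a_def ee_def using dip
          by (simp add: field_simps)
        then show ?thesis by (intro fps_ext) (auto simp: fps_X_nth algebra_simps)
      qed
      have "d i * fps_nth ((1 + fps_X) * B) m - d p * fps_nth B m =
          fps_nth ((fps_const (d i) * (1 + fps_X) - fps_const (d p)) * B) m"
      proof -
        have "(fps_const (d i) * (1 + fps_X) - fps_const (d p)) * B = fps_const (d i) * ((1 + fps_X) * B) - fps_const (d p) * B"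
          by (simp add: algebra_simps)
        then show ?thesis by (simp only: fps_sub_nth fps_mult_left_const_nth)
      qed
      also have "\<dots> = (d i - d p) * fps_nth (fps_binomial (real r) * Bn I d n' i) m"
      proof -
        have "(fps_const (d i - d p) * (1 + fps_const a * fps_X)) * (fps_binomial (real r) * (Eb (Suc k) a * R)) =
          fps_const (d i - d p) * (fps_binomial (real r) * (((1 + fps_const a * fps_X) * Eb (Suc k) a) * R))"
          by (simp only: mult_ac)
        then show ?thesis unfolding lin B_def Bn1 Bn2 Eb_contig by (simp only: fps_mult_left_const_nth)
      qed
      finally have key: "d i * fps_nth ((1 + fps_X) * B) m - d p * fps_nth B m =
          (d i - d p) * fps_nth (fps_binomial (real r) * Bn I d n' i) m" .
      have "rho I d n i (Suc r) - d p * rho I d n i r =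
         d i ^ r / d i ^ m / Kc I d n i * (d i * fps_nth ((1 + fps_X) * B) m - d p * fps_nth B m)"
        using rho_step[of n i I d r "d p", OF ni] unfolding m_def[symmetric] B_def[symmetric] .
      also have "\<dots> = rho I d n' i r"
      proof -
        have KK: "Kc I d n i = (d i - d p) * Kc I d n' i" unfolding K1 K2 by simp
        have "d i ^ r / d i ^ m / Kc I d n i * ((d i - d p) * fps_nth (fps_binomial (real r) * Bn I d n' i) m)
            = d i ^ r / d i ^ m / Kc I d n' i * fps_nth (fps_binomial (real r) * Bn I d n' i) m"
          unfolding KK using dip by (simp add: frac_cancel)
        then show ?thesis unfolding key using ni n'i by (simp add: rho_def m_def)
      qed
      finally show ?thesis unfolding n'_def .
    qed
  next
    case True
    have n'i: "n' i = n i - 1" using True by (simp add: n'_def)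
    have Bn': "Bn I d n' i = Bn I d n i" unfolding Bn_def
      by (intro prod.cong) (auto simp: n'_def True)
    have Kc': "Kc I d n' i = Kc I d n i" unfolding Kc_def
      by (intro prod.cong) (auto simp: n'_def True)
    have ni: "n i \<ge> 1" using p True by simp
    have "rho I d n i (Suc r) - d p * rho I d n i r =
         d i ^ r / d i ^ m / Kc I d n i * (d i * fps_nth ((1 + fps_X) * B) m - d i * fps_nth B m)"
      using rho_step[of n i I d r "d p"] ni True unfolding m_def[symmetric] B_def[symmetric] by simp
    also have "d i * fps_nth ((1 + fps_X) * B) m - d i * fps_nth B m = d i * fps_nth (fps_X * B) m"
    proof -
      have "(1 + fps_X) * B = B + fps_X * B" by (simp add: algebra_simps)
      then show ?thesis by (simp only: fps_add_nth algebra_simps)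
    qed
    finally have eq: "rho I d n i (Suc r) - d p * rho I d n i r = d i ^ r / d i ^ m / Kc I d n i * (d i * fps_nth (fps_X * B) m)" .
    show ?thesis
    proof (cases "m = 0")
      case True
      have "rho I d n' i r = 0" using n'i True m_def by (simp add: rho_def)
      moreover have "fps_nth (fps_X * B) m = 0" using True by simp
      ultimately show ?thesis using eq unfolding n'_def by simp
    next
      case False
      then obtain m' where m': "m = Suc m'" by (cases m) auto
      have n'i2: "n' i = Suc m'" using n'i m' m_def by simp
      have X: "fps_nth (fps_X * B) m = fps_nth B m'" using m' by simp
      have R: "rho I d n' i r = d i ^ r / d i ^ m' / Kc I d n i * fps_nth B m'"
        using n'i2 unfolding rho_def Bn' Kc' B_def by simp
      have "d i ^ r / d i ^ m / Kc I d n i * (d i * fps_nth B m') = d i ^ r / d i ^ m' / Kc I d n i * fps_nth B m'"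
        unfolding m' power_Suc using frac2[OF nzi] .
      then show ?thesis unfolding eq X R[symmetric] n'_def .
    qed
  qed
qed



lemma sum_upd_dec:
  fixes n :: "nat \<Rightarrow> nat"
  assumes "finite I" "p \<in> I" "n p \<ge> 1"
  shows "sum (n(p := n p - 1)) I = sum n I - 1"
proof -
  have f1: "sum n I = n p + sum n (I - {p})" using assms by (simp add: sum.remove)
  have f2: "sum (n(p := n p - 1)) I = (n p - 1) + sum (n(p := n p - 1)) (I - {p})"
    using assms by (simp add: sum.remove)
  have f3: "sum (n(p := n p - 1)) (I - {p}) = sum n (I - {p})" by (rule sum.cong) auto
  have g: "\<And>a s. 1 \<le> a \<Longrightarrow> a - 1 + s = a + s - (1::nat)" by arith
  show ?thesis unfolding f2 f3 f1 using g[OF assms(3)] .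
qed

lemma uu_contig:
  assumes fin: "finite I" and inj: "inj_on d I" and nz: "\<forall>q\<in>I. d q \<noteq> 0"
    and p: "p \<in> I" "n p \<ge> 1"
  shows "uu I d n (Suc r) - d p * uu I d n r = uu I d (n(p := n p - 1)) r"
  unfolding uu_def sum_distrib_left sum_subtractf[symmetric]
  by (intro sum.cong refl rho_contig[where n=n and p=p, OF assms])

lemma uu_single:
  assumes fin: "finite I" and p: "p \<in> I" "n p \<ge> 1" and z: "\<forall>q\<in>I-{p}. n q = 0"
  shows "uu I d n r = d p ^ r / d p ^ (n p - 1) * (real r gchoose (n p - 1))"
proof -
  have "uu I d n r = rho I d n p r + (\<Sum>q\<in>I-{p}. rho I d n q r)"
    unfolding uu_def using fin p by (simp add: sum.remove)
  also have "(\<Sum>q\<in>I-{p}. rho I d n q r) = 0" using z by (intro sum.neutral) (auto simp: rho_def)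
  also have "Bn I d n p = 1" unfolding Bn_def using z by (intro prod.neutral) (auto simp: Eb_0)
  then have "rho I d n p r = d p ^ r / d p ^ (n p - 1) * (real r gchoose (n p - 1))"
    using p z unfolding rho_def Kc_def by simp
  finally show ?thesis by simp
qed

lemma uu_main:
  assumes fin: "finite I" and inj: "inj_on d I" and nz: "\<forall>q\<in>I. d q \<noteq> 0"
  shows "sum n I = N \<Longrightarrow> N \<ge> 1 \<Longrightarrow> r < N \<Longrightarrow> uu I d n r = (if r = N - 1 then 1 else 0)"
proof (induction N arbitrary: n r rule: less_induct)
  case (less N)
  obtain p1 where p1: "p1 \<in> I" "n p1 \<ge> 1"
    using less.prems(1,2) by (metis One_nat_def Suc_leI not_gr0 sum.neutral not_one_le_zero)
  show ?case
  proof (cases "\<exists>p2\<in>I. p2 \<noteq> p1 \<and> n p2 \<ge> 1")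
    case True
    then obtain p2 where p2: "p2 \<in> I" "p2 \<noteq> p1" "n p2 \<ge> 1" by blast
    define n1 where "n1 = n(p1 := n p1 - 1)"
    define n2 where "n2 = n(p2 := n p2 - 1)"
    have s1: "sum n1 I = N - 1" using sum_upd_dec[where n=n and p=p1, OF fin p1] less.prems(1) by (simp add: n1_def)
    have s2: "sum n2 I = N - 1" using sum_upd_dec[where n=n and p=p2, OF fin p2(1,3)] less.prems(1) by (simp add: n2_def)
    have "sum n {p1, p2} \<le> sum n I" using fin p1 p2 by (intro sum_mono2) auto
    then have N2: "N \<ge> 2" using p1 p2 less.prems(1) by simp
    have IH1: "uu I d n1 r' = (if r' = N - 2 then 1 else 0)" if "r' < N - 1" for r'
      using less.IH[of "N - 1" n1 r'] s1 N2 that by (simp add: numeral_2_eq_2)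
    have IH2: "uu I d n2 r' = (if r' = N - 2 then 1 else 0)" if "r' < N - 1" for r'
      using less.IH[of "N - 1" n2 r'] s2 N2 that by (simp add: numeral_2_eq_2)
    have c1: "uu I d n (Suc r') - d p1 * uu I d n r' = uu I d n1 r'" for r'
      unfolding n1_def by (rule uu_contig[where n=n and p=p1, OF fin inj nz p1])
    have c2: "uu I d n (Suc r') - d p2 * uu I d n r' = uu I d n2 r'" for r'
      unfolding n2_def by (rule uu_contig[where n=n and p=p2, OF fin inj nz p2(1,3)])
    have dd: "d p2 - d p1 \<noteq> 0" using inj p1 p2 by (auto dest: inj_onD)
    have low: "uu I d n r' = 0" if "r' < N - 1" for r'
    proof -
      have "(d p2 - d p1) * uu I d n r' = uu I d n1 r' - uu I d n2 r'"
        using c1[of r'] c2[of r'] by (simp add: algebra_simps)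
      also have "\<dots> = 0" using IH1[OF that] IH2[OF that] by simp
      finally show ?thesis using dd by simp
    qed
    show ?thesis
    proof (cases "r = N - 1")
      case False then show ?thesis using low less.prems(3) by simp
    next
      case True
      have eqr: "r = Suc (N - 2)" using True N2 by simp
      have "uu I d n r = d p1 * uu I d n (N - 2) + uu I d n1 (N - 2)"
        using c1[of "N - 2"] eqr by (simp add: algebra_simps)
      also have "\<dots> = 1" using low[of "N - 2"] IH1[of "N - 2"] N2 by simp
      finally show ?thesis using True by simp
    qed
  next
    case False
    then have z: "\<forall>q\<in>I-{p1}. n q = 0" by auto
    have "sum n I = n p1 + sum n (I - {p1})" using fin p1 by (simp add: sum.remove)
    then have Nn: "n p1 = N" using z less.prems(1) by simp
    have "uu I d n r = d p1 ^ r / d p1 ^ (N - 1) * (real r gchoose (N - 1))"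
      using uu_single[where n=n and p=p1, OF fin p1 z] Nn by simp
    also have "\<dots> = (if r = N - 1 then 1 else 0)"
    proof (cases "r = N - 1")
      case True
      have "real (N - 1) gchoose (N - 1) = 1" by (metis binomial_gbinomial binomial_n_n of_nat_1)
      then show ?thesis using nz p1 True by simp
    next
      case False
      then have "r < N - 1" using less.prems(3) by simp
      then have "(real r gchoose (N - 1)) = 0"
        by (metis binomial_eq_0 binomial_gbinomial of_nat_0)
      then show ?thesis using False by simp
    qed
    finally show ?thesis .
  qed
qed



lemma sum_PiE_insert:
  assumes "x \<notin> J"
  shows "(\<Sum>g\<in>PiE (insert x J) B. F g) = (\<Sum>y\<in>B x. \<Sum>g\<in>PiE J B. F (g(x := y)))"
proof -
  have "(\<Sum>g\<in>PiE (insert x J) B. F g) = (\<Sum>g\<in>(\<lambda>(y, g). g(x := y)) ` (B x \<times> PiE J B). F g)"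
    by (simp add: PiE_insert_eq)
  also have "\<dots> = (\<Sum>yg\<in>B x \<times> PiE J B. F ((\<lambda>(y, g). g(x := y)) yg))"
    using sum.reindex[OF inj_combinator[OF assms], of F B] by (simp add: comp_def)
  also have "\<dots> = (\<Sum>y\<in>B x. \<Sum>g\<in>PiE J B. F (g(x := y)))"
    by (simp add: sum.cartesian_product split_def)
  finally show ?thesis .
qed

lemma vand_inner:
  fixes \<gamma> b :: real
  assumes "\<gamma> > 0" "L \<le> m"
  shows "(- 1) ^ m * pochhammer \<gamma> m / fact m *
     (\<Sum>j\<le>m. pochhammer (- real m) (L + j) / pochhammer \<gamma> (L + j) * (pochhammer b j / fact j))
   = ((b - \<gamma> - real L) gchoose (m - L))"
proof -
  define M where "M = m - L"
  have m: "m = L + M" using assms M_def by simp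
  have pg: "pochhammer \<gamma> L > 0" "pochhammer (\<gamma> + real L) j > 0" for j
    using assms by (auto intro!: pochhammer_pos)
  have "(\<Sum>j\<le>m. pochhammer (- real m) (L + j) / pochhammer \<gamma> (L + j) * (pochhammer b j / fact j))
      = pochhammer (- real m) L / pochhammer \<gamma> L *
        (\<Sum>j\<le>m. pochhammer (- real M) j / pochhammer (\<gamma> + real L) j * (pochhammer b j / fact j))"
  proof -
    have "pochhammer (- real m) (L + j) / pochhammer \<gamma> (L + j) * (pochhammer b j / fact j) =
      pochhammer (- real m) L / pochhammer \<gamma> L * (pochhammer (- real M) j / pochhammer (\<gamma> + real L) j * (pochhammer b j / fact j))" for j
    proof -
      have e: "- real m + real L = - real M" using m by simp
      have p1: "pochhammer (- real m) (L + j) = pochhammer (- real m) L * pochhammer (- real M) j"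
        by (simp only: pochhammer_product' e)
      have p2: "pochhammer \<gamma> (L + j) = pochhammer \<gamma> L * pochhammer (\<gamma> + real L) j"
        by (rule pochhammer_product')
      show ?thesis unfolding p1 p2 using pg(1) pg(2)[of j] by (simp add: field_simps)
    qed
    then show ?thesis by (simp add: sum_distrib_left)
  qed
  also have "(\<Sum>j\<le>m. pochhammer (- real M) j / pochhammer (\<gamma> + real L) j * (pochhammer b j / fact j))
      = (\<Sum>j=0..M. pochhammer b j * pochhammer (- real M) j / (fact j * pochhammer (\<gamma> + real L) j))"
  proof -
    have "(\<Sum>j\<le>m. pochhammer (- real M) j / pochhammer (\<gamma> + real L) j * (pochhammer b j / fact j))
        = (\<Sum>j\<in>{0..M}. pochhammer (- real M) j / pochhammer (\<gamma> + real L) j * (pochhammer b j / fact j))"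
    proof (rule sum.mono_neutral_right)
      show "\<forall>j\<in>{..m} - {0..M}. pochhammer (- real M) j / pochhammer (\<gamma> + real L) j * (pochhammer b j / fact j) = 0"
        by (auto simp: pochhammer_of_nat_eq_0_iff)
    qed (auto simp: m)
    then show ?thesis by (simp add: field_simps)
  qed
  also have "\<dots> = pochhammer (\<gamma> + real L - b) M / pochhammer (\<gamma> + real L) M"
  proof -
    have c: "\<forall>i \<in> {0..< M}. \<gamma> + real L \<noteq> - of_nat i"
    proof
      fix i assume "i \<in> {0..<M}"
      have "\<gamma> + real L > 0" using assms by simp
      moreover have "- of_nat i \<le> (0::real)" by simp
      ultimately show "\<gamma> + real L \<noteq> - of_nat i" by linarith
    qed
    show ?thesis using Vandermonde_pochhammer[where a=b and n=M and c="\<gamma> + real L", OF c]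
      by (simp add: of_nat_fact)
  qed
  finally have S: "(\<Sum>j\<le>m. pochhammer (- real m) (L + j) / pochhammer \<gamma> (L + j) * (pochhammer b j / fact j))
     = pochhammer (- real m) L / pochhammer \<gamma> L * (pochhammer (\<gamma> + real L - b) M / pochhammer (\<gamma> + real L) M)" .
  have g: "pochhammer \<gamma> m = pochhammer \<gamma> L * pochhammer (\<gamma> + real L) M"
    unfolding m by (rule pochhammer_product')
  have pm: "pochhammer (- real m) L = (- 1) ^ L * pochhammer (real M + 1) L"
    using pochhammer_minus[of "real m" L] m by simp
  have fm: "(fact m :: real) = fact M * pochhammer (real M + 1) L"
    unfolding m pochhammer_fact using pochhammer_product'[of 1 M L] by (simp add: add.commute)
  have sg: "(- 1 :: real) ^ m * (- 1) ^ L = (- 1) ^ M"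
  proof -
    have "(- 1 :: real) ^ m * (- 1) ^ L = (- 1) ^ M * ((- 1) ^ L * (- 1) ^ L)"
      unfolding m by (simp add: power_add)
    also have "(- 1 :: real) ^ L * (- 1) ^ L = 1" by (simp flip: power_add add: mult_2[symmetric])
    finally show ?thesis by simp
  qed
  have pM: "pochhammer (real M + 1) L > 0" by (intro pochhammer_pos) simp
  have "(- 1) ^ m * pochhammer \<gamma> m / fact m * ((- 1) ^ L * pochhammer (real M + 1) L / pochhammer \<gamma> L *
       (pochhammer (\<gamma> + real L - b) M / pochhammer (\<gamma> + real L) M))
     = ((- 1) ^ m * (- 1) ^ L) * pochhammer (\<gamma> + real L - b) M / fact M"
    unfolding g fm using pg(1) pg(2)[of M] pM by (simp add: field_simps)
  also have "\<dots> = ((b - \<gamma> - real L) gchoose M)"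
  proof -
    have "\<gamma> + real L - b = - (b - \<gamma> - real L)" by simp
    then show ?thesis unfolding sg by (simp only: gbinomial_pochhammer)
  qed
  finally show ?thesis unfolding S pm M_def .
qed



lemma prod_expand:
  fixes nn :: "nat \<Rightarrow> nat" and e :: "nat \<Rightarrow> real"
  assumes "finite J"
  shows "t \<le> T \<Longrightarrow> fps_nth (fps_binomial a * (\<Prod>q\<in>J. Eb (nn q) (1 - e q))) t =
    (\<Sum>l\<in>PiE J (\<lambda>_. {..T}). if sum l J \<le> t then
       (\<Prod>q\<in>J. pochhammer (real (nn q)) (l q) / fact (l q) * e q ^ l q) *
       ((a - real (sum nn J) - real (sum l J)) gchoose (t - sum l J)) else 0)"
  using assms
proof (induction J arbitrary: a t rule: finite_induct)
  case empty
  then show ?case by simp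
next
  case (insert x J)
  let ?W = "\<lambda>l. (\<Prod>q\<in>J. pochhammer (real (nn q)) (l q) / fact (l q) * e q ^ l q)"
  let ?al = "\<lambda>l. pochhammer (real (nn x)) l / fact l * e x ^ l"
  have "fps_nth (fps_binomial a * (\<Prod>q\<in>insert x J. Eb (nn q) (1 - e q))) t =
      fps_nth (Eb (nn x) (1 - e x) * (fps_binomial a * (\<Prod>q\<in>J. Eb (nn q) (1 - e q)))) t"
    using insert.hyps by (simp add: mult_ac)
  also have "\<dots> = (\<Sum>l\<le>t. ?al l * fps_nth (fps_binomial (- real (nn x) - real l) *
       (fps_binomial a * (\<Prod>q\<in>J. Eb (nn q) (1 - e q)))) (t - l))"
    by (rule Eb_mult)
  also have "\<dots> = (\<Sum>l\<le>t. ?al l * fps_nth (fps_binomial (a - real (nn x) - real l) *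
       (\<Prod>q\<in>J. Eb (nn q) (1 - e q))) (t - l))"
  proof (intro sum.cong refl)
    fix l
    have "fps_binomial (- real (nn x) - real l) * (fps_binomial a * (\<Prod>q\<in>J. Eb (nn q) (1 - e q))) =
       fps_binomial (a - real (nn x) - real l) * (\<Prod>q\<in>J. Eb (nn q) (1 - e q))"
      by (simp add: mult.assoc[symmetric] fps_binomial_add_mult[symmetric] algebra_simps)
    then show "?al l * fps_nth (fps_binomial (- real (nn x) - real l) *
       (fps_binomial a * (\<Prod>q\<in>J. Eb (nn q) (1 - e q)))) (t - l) = ?al l * fps_nth (fps_binomial (a - real (nn x) - real l) *
       (\<Prod>q\<in>J. Eb (nn q) (1 - e q))) (t - l)" by (rule arg_cong[where f = "\<lambda>F. ?al l * fps_nth F (t - l)"])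
  qed
  also have "\<dots> = (\<Sum>l\<le>t. \<Sum>g\<in>PiE J (\<lambda>_. {..T}). if l + sum g J \<le> t then
       ?al l * ?W g * ((a - real (nn x + sum nn J) - real (l + sum g J)) gchoose (t - (l + sum g J))) else 0)"
  proof (intro sum.cong refl)
    fix l assume l: "l \<in> {..t}"
    have "t - l \<le> T" using insert.prems by simp
    note IH = insert.IH[OF this, of "a - real (nn x) - real l"]
    show "?al l * fps_nth (fps_binomial (a - real (nn x) - real l) * (\<Prod>q\<in>J. Eb (nn q) (1 - e q))) (t - l) =
      (\<Sum>g\<in>PiE J (\<lambda>_. {..T}). if l + sum g J \<le> t then
       ?al l * ?W g * ((a - real (nn x + sum nn J) - real (l + sum g J)) gchoose (t - (l + sum g J))) else 0)"
      unfolding IH sum_distrib_left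
    proof (intro sum.cong refl)
      fix g
      have c1: "(sum g J \<le> t - l) = (l + sum g J \<le> t)" using l by auto
      have c2: "a - real (nn x) - real l - real (sum nn J) - real (sum g J) = a - real (nn x + sum nn J) - real (l + sum g J)"
        by simp
      have c3: "t - l - sum g J = t - (l + sum g J)" by simp
      show "?al l * (if sum g J \<le> t - l then ?W g * ((a - real (nn x) - real l - real (sum nn J) - real (sum g J)) gchoose (t - l - sum g J)) else 0) =
        (if l + sum g J \<le> t then ?al l * ?W g * ((a - real (nn x + sum nn J) - real (l + sum g J)) gchoose (t - (l + sum g J))) else 0)"
        unfolding c1 c2 c3 by simp
    qed
  qed
  also have "\<dots> = (\<Sum>l\<in>{..T}. \<Sum>g\<in>PiE J (\<lambda>_. {..T}). if l + sum g J \<le> t then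
       ?al l * ?W g * ((a - real (nn x + sum nn J) - real (l + sum g J)) gchoose (t - (l + sum g J))) else 0)"
  proof (rule sum.mono_neutral_left)
    show "\<forall>l\<in>{..T} - {..t}. (\<Sum>g\<in>PiE J (\<lambda>_. {..T}). if l + sum g J \<le> t then
       ?al l * ?W g * ((a - real (nn x + sum nn J) - real (l + sum g J)) gchoose (t - (l + sum g J))) else 0) = 0"
      by auto
  qed (use insert.prems in auto)
  also have "\<dots> = (\<Sum>l\<in>PiE (insert x J) (\<lambda>_. {..T}). if sum l (insert x J) \<le> t then
       (\<Prod>q\<in>insert x J. pochhammer (real (nn q)) (l q) / fact (l q) * e q ^ l q) *
       ((a - real (sum nn (insert x J)) - real (sum l (insert x J))) gchoose (t - sum l (insert x J))) else 0)"
    unfolding sum_PiE_insert[OF insert.hyps(2)]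
  proof (intro sum.cong refl)
    fix l g assume g: "g \<in> PiE J (\<lambda>_. {..T})"
    have s: "sum (g(x := l)) (insert x J) = l + sum g J"
      using insert.hyps by (simp add: sum.insert) (intro sum.cong, auto)
    have p: "(\<Prod>q\<in>insert x J. pochhammer (real (nn q)) ((g(x := l)) q) / fact ((g(x := l)) q) * e q ^ (g(x := l)) q)
       = ?al l * ?W g"
    proof -
      have "(\<Prod>q\<in>J. pochhammer (real (nn q)) ((g(x := l)) q) / fact ((g(x := l)) q) * e q ^ (g(x := l)) q) = ?W g"
        using insert.hyps by (intro prod.cong) auto
      then show ?thesis using insert.hyps by simp
    qed
    have sn: "sum nn (insert x J) = nn x + sum nn J" using insert.hyps by simp
    show "(if l + sum g J \<le> t then ?al l * ?W g * ((a - real (nn x + sum nn J) - real (l + sum g J)) gchoose (t - (l + sum g J))) else 0) =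
      (if sum (g(x := l)) (insert x J) \<le> t then
       (\<Prod>q\<in>insert x J. pochhammer (real (nn q)) ((g(x := l)) q) / fact ((g(x := l)) q) * e q ^ (g(x := l)) q) *
       ((a - real (sum nn (insert x J)) - real (sum (g(x := l)) (insert x J))) gchoose (t - sum (g(x := l)) (insert x J))) else 0)"
      unfolding s p sn ..
  qed
  finally show ?case .
qed


lemma G2:
  fixes w :: "nat \<Rightarrow> nat \<Rightarrow> real" and b \<gamma> :: real
  assumes fin: "finite I" and i: "i \<in> I" and g: "\<gamma> > 0"
  shows "(- 1) ^ m * pochhammer \<gamma> m / fact m *
     (\<Sum>l\<in>PiE I (\<lambda>_. {..m}). pochhammer (- real m) (sum l I) / pochhammer \<gamma> (sum l I) *
         (pochhammer b (l i) / fact (l i)) * (\<Prod>q\<in>I-{i}. w q (l q)))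
   = (\<Sum>l\<in>PiE (I-{i}) (\<lambda>_. {..m}). if sum l (I-{i}) \<le> m then
        (\<Prod>q\<in>I-{i}. w q (l q)) * ((b - \<gamma> - real (sum l (I-{i}))) gchoose (m - sum l (I-{i}))) else 0)"
proof -
  let ?J = "I - {i}"
  have Ieq: "I = insert i ?J" using i by auto
  have niJ: "i \<notin> ?J" by simp
  let ?F = "\<lambda>l. pochhammer (- real m) (sum l I) / pochhammer \<gamma> (sum l I) *
         (pochhammer b (l i) / fact (l i)) * (\<Prod>q\<in>I-{i}. w q (l q))"
  have "(\<Sum>l\<in>PiE I (\<lambda>_. {..m}). ?F l) = (\<Sum>j\<in>{..m}. \<Sum>l\<in>PiE ?J (\<lambda>_. {..m}). ?F (l(i := j)))"
    by (subst Ieq, subst sum_PiE_insert[OF niJ]) (simp only: Ieq[symmetric])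
  also have "\<dots> = (\<Sum>l\<in>PiE ?J (\<lambda>_. {..m}). \<Sum>j\<in>{..m}. ?F (l(i := j)))"
    by (rule sum.swap)
  also have "\<dots> = (\<Sum>l\<in>PiE ?J (\<lambda>_. {..m}). (\<Prod>q\<in>?J. w q (l q)) *
      (\<Sum>j\<le>m. pochhammer (- real m) (sum l ?J + j) / pochhammer \<gamma> (sum l ?J + j) * (pochhammer b j / fact j)))"
  proof (intro sum.cong refl)
    fix l
    have s: "sum (l(i := j)) I = sum l ?J + j" for j :: nat
    proof -
      have "sum (l(i := j)) I = (l(i := j)) i + sum (l(i := j)) ?J" by (rule sum.remove[OF fin i])
      then have "sum (l(i := j)) I = j + sum (l(i := j)) ?J" by simp
      also have "sum (l(i := j)) ?J = sum l ?J" by (intro sum.cong) auto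
      finally show ?thesis by (simp add: add.commute)
    qed
    have p: "(\<Prod>q\<in>?J. w q ((l(i := j)) q)) = (\<Prod>q\<in>?J. w q (l q))" for j :: nat
      by (intro prod.cong) auto
    show "(\<Sum>j\<in>{..m}. ?F (l(i := j))) = (\<Prod>q\<in>?J. w q (l q)) *
      (\<Sum>j\<le>m. pochhammer (- real m) (sum l ?J + j) / pochhammer \<gamma> (sum l ?J + j) * (pochhammer b j / fact j))"
      unfolding sum_distrib_left by (intro sum.cong refl) (simp only: s p fun_upd_same, simp add: mult_ac)
  qed
  finally have E: "(\<Sum>l\<in>PiE I (\<lambda>_. {..m}). ?F l) = (\<Sum>l\<in>PiE ?J (\<lambda>_. {..m}). (\<Prod>q\<in>?J. w q (l q)) *
      (\<Sum>j\<le>m. pochhammer (- real m) (sum l ?J + j) / pochhammer \<gamma> (sum l ?J + j) * (pochhammer b j / fact j)))" .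
  show ?thesis unfolding E sum_distrib_left[of "(- 1) ^ m * pochhammer \<gamma> m / fact m"]
  proof (intro sum.cong refl)
    fix l
    show "(- 1) ^ m * pochhammer \<gamma> m / fact m * ((\<Prod>q\<in>?J. w q (l q)) *
      (\<Sum>j\<le>m. pochhammer (- real m) (sum l ?J + j) / pochhammer \<gamma> (sum l ?J + j) * (pochhammer b j / fact j))) =
      (if sum l ?J \<le> m then (\<Prod>q\<in>?J. w q (l q)) * ((b - \<gamma> - real (sum l ?J)) gchoose (m - sum l ?J)) else 0)"
    proof (cases "sum l ?J \<le> m")
      case True
      show ?thesis using vand_inner[OF g True, of b] True by (simp add: mult_ac)
    next
      case False
      have "pochhammer (- real m) (sum l ?J + j) = 0" for j
        using False by (simp add: pochhammer_of_nat_eq_0_iff)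
      then show ?thesis using False by simp
    qed
  qed
qed



definition dd :: "(nat \<Rightarrow> real) \<Rightarrow> nat \<Rightarrow> real" where
  "dd c q = c q / (1 - c q)"

definition Cpre :: "nat \<Rightarrow> real \<Rightarrow> (nat \<Rightarrow> real) \<Rightarrow> (nat \<Rightarrow> nat) \<Rightarrow> nat \<Rightarrow> real" where
  "Cpre p \<beta> c n i = (- 1) ^ (n i - 1) * (1 - c i) powr (real (msize p n) - 1 + \<beta>)
    / (fact (n i - 1) * pochhammer \<beta> (msize p n - n i) * c i ^ (n i - 1))
    * (\<Prod>q\<in>{1..p}-{i}. ((1 - c q) / (c i - c q)) ^ n q)"

definition coefl :: "nat \<Rightarrow> real \<Rightarrow> (nat \<Rightarrow> real) \<Rightarrow> (nat \<Rightarrow> nat) \<Rightarrow> nat \<Rightarrow> (nat \<Rightarrow> nat) \<Rightarrow> real" where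
  "coefl p \<beta> c n i l = pochhammer (1 - real (n i)) (\<Sum>q=1..p. l q)
         / pochhammer (\<beta> + real (msize p n) - real (n i)) (\<Sum>q=1..p. l q)
         * (1 - c i) ^ l i / fact (l i)
         * (\<Prod>q\<in>{1..p}-{i}. pochhammer (real (n q)) (l q) / fact (l q)
              * ((1 - c i) * c q / (c q - c i)) ^ l q)"

definition Mf :: "nat \<Rightarrow> real \<Rightarrow> (nat \<Rightarrow> real) \<Rightarrow> (nat \<Rightarrow> nat) \<Rightarrow> nat \<Rightarrow> real poly" where
  "Mf p \<beta> c n i = (if n i = 0 then 0 else
     smult (Cpre p \<beta> c n i) (\<Sum>l\<in>PiE {1..p} (\<lambda>_. {0..<n i}). smult (coefl p \<beta> c n i l) (pb \<beta> (l i))))"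

lemma poly_Mf:
  assumes "n i \<ge> 1"
  shows "poly (Mf p \<beta> c n i) x = meixner_typeI_formula p \<beta> c n i x"
proof -
  have "poly (Mf p \<beta> c n i) x = Cpre p \<beta> c n i *
     (\<Sum>l\<in>PiE {1..p} (\<lambda>_. {0..<n i}). coefl p \<beta> c n i l * pochhammer (x + \<beta>) (l i))"
    using assms by (simp add: Mf_def poly_sum poly_pb)
  also have "\<dots> = meixner_typeI_formula p \<beta> c n i x"
    unfolding meixner_typeI_formula_def Cpre_def[symmetric]
    by (intro arg_cong[where f = "(*) (Cpre p \<beta> c n i)"] sum.cong refl)
       (simp add: coefl_def divide_inverse mult_ac add.commute)
  finally show ?thesis .
qed

lemma degree_Mf:
  assumes "n i \<ge> 1" "i \<in> {1..p}"
  shows "degree (Mf p \<beta> c n i) \<le> n i - 1"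
proof -
  have "degree (\<Sum>l\<in>PiE {1..p} (\<lambda>_. {0..<n i}). smult (coefl p \<beta> c n i l) (pb \<beta> (l i))) \<le> n i - 1"
  proof (rule degree_sum_le)
    show "finite (PiE {1..p} (\<lambda>_. {0..<n i}))" by (simp add: finite_PiE)
  next
    fix l assume l: "l \<in> PiE {1..p} (\<lambda>_. {0..<n i})"
    show "degree (smult (coefl p \<beta> c n i l) (pb \<beta> (l i))) \<le> n i - 1"
    proof -
      have "l i < n i" using l assms(2) by (auto simp: PiE_iff)
      then have "degree (pb \<beta> (l i)) \<le> n i - 1" using pb_monic[of \<beta> "l i"] by simp
      then show ?thesis by (metis degree_smult_le le_trans)
    qed
  qed
  moreover have "degree (Mf p \<beta> c n i) \<le> degree (\<Sum>l\<in>PiE {1..p} (\<lambda>_. {0..<n i}). smult (coefl p \<beta> c n i l) (pb \<beta> (l i)))"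
    using assms by (simp add: Mf_def degree_smult_le)
  ultimately show ?thesis by linarith
qed



lemma ee_dd:
  fixes ci cq :: real
  assumes "0 < ci" "ci < 1" "0 < cq" "cq < 1" "cq \<noteq> ci"
  shows "(1 - ci) * cq / (cq - ci) = (cq / (1 - cq)) / (cq / (1 - cq) - ci / (1 - ci))"
proof -
  have nz: "1 - cq \<noteq> 0" "1 - ci \<noteq> 0" "cq - ci \<noteq> 0" using assms by auto
  have "cq / (1 - cq) - ci / (1 - ci) = (cq - ci) / ((1 - cq) * (1 - ci))"
    using nz by (simp add: divide_simps) (simp add: algebra_simps)
  then show ?thesis using nz by (simp add: divide_simps)
qed

lemma powr_split:
  assumes "0 < x"
  shows "x powr (- (\<beta> + real r + real l)) = x powr (- \<beta>) / (x ^ r * x ^ l)"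
proof -
  have "x powr (\<beta> + real r + real l) = x powr \<beta> * x ^ r * x ^ l"
    using assms by (simp add: powr_add powr_realpow)
  moreover have "x powr (- (\<beta> + real r + real l)) = inverse (x powr (\<beta> + real r + real l))"
    by (rule powr_minus)
  ultimately show ?thesis using assms by (simp add: divide_inverse powr_minus)
qed

lemma stepA_real:
  fixes A W fl pbr P :: real
  assumes "0 < ci" "ci < 1"
  shows "(A * (1 - ci) ^ l / fl * W) * (pbr * P * ci ^ r * (1 - ci) powr (- (\<beta> + real r + real l)))
    = pbr * ((ci / (1 - ci)) ^ r * (1 - ci) powr (- \<beta>)) * (A * (P / fl) * W)"
proof -
  have x: "0 < 1 - ci" using assms by simp
  show ?thesis unfolding powr_split[OF x] using x by (simp add: field_simps power_divide)
qed

lemma stepC: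
  fixes ci \<beta> Pc Kc F pbr :: real and N K m r :: nat
  assumes c: "0 < ci" "ci < 1" and b: "\<beta> > 0" and N: "N = K + m + 1"
    and Pc: "Pc = 1 / ((1 - ci) ^ K * Kc)" and Kc: "Kc \<noteq> 0"
  shows "(- 1) ^ m * (1 - ci) powr (real N - 1 + \<beta>) / (fact m * pochhammer \<beta> K * ci ^ m) * Pc *
      (pbr * ((ci / (1 - ci)) ^ r * (1 - ci) powr (- \<beta>)) *
       (fact m / ((- 1) ^ m * pochhammer (\<beta> + real K) m) * F))
    = pbr / pochhammer \<beta> (N - 1) * ((ci / (1 - ci)) ^ r / (ci / (1 - ci)) ^ m / Kc * F)"
proof -
  have x: "0 < 1 - ci" using c by simp
  have g1: "(1 - ci) powr (real N - 1 + \<beta>) * (1 - ci) powr (- \<beta>) = (1 - ci) ^ K * (1 - ci) ^ m"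
  proof -
    have "(1 - ci) powr (real N - 1 + \<beta>) * (1 - ci) powr (- \<beta>) = (1 - ci) powr (real N - 1 + \<beta> + - \<beta>)"
      by (rule powr_add[symmetric])
    also have "real N - 1 + \<beta> + - \<beta> = real (K + m)" using N by simp
    also have "(1 - ci) powr real (K + m) = (1 - ci) ^ K * (1 - ci) ^ m"
      using powr_realpow[OF x, of "K + m"] by (simp add: power_add)
    finally show ?thesis .
  qed
  have g2: "pochhammer \<beta> K * pochhammer (\<beta> + real K) m = pochhammer \<beta> (N - 1)"
    using pochhammer_product'[of \<beta> K m] N by simp
  have p1: "pochhammer \<beta> K > 0" "pochhammer (\<beta> + real K) m > 0"
    using b by (auto intro!: pochhammer_pos)
  have s: "((- 1 :: real) ^ m) \<noteq> 0" by simp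
  have "(- 1) ^ m * (1 - ci) powr (real N - 1 + \<beta>) / (fact m * pochhammer \<beta> K * ci ^ m) * Pc *
      (pbr * ((ci / (1 - ci)) ^ r * (1 - ci) powr (- \<beta>)) *
       (fact m / ((- 1) ^ m * pochhammer (\<beta> + real K) m) * F))
    = pbr * F * (ci / (1 - ci)) ^ r * ((1 - ci) powr (real N - 1 + \<beta>) * (1 - ci) powr (- \<beta>)) * Pc
       / ((pochhammer \<beta> K * pochhammer (\<beta> + real K) m) * ci ^ m)"
    using p1 s by (simp add: field_simps)
  also have "\<dots> = pbr * F * (ci / (1 - ci)) ^ r * ((1 - ci) ^ K * (1 - ci) ^ m) * (1 / ((1 - ci) ^ K * Kc))
       / (pochhammer \<beta> (N - 1) * ci ^ m)"
    unfolding g1 g2 Pc ..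
  also have "\<dots> = pbr / pochhammer \<beta> (N - 1) * ((ci / (1 - ci)) ^ r / (ci / (1 - ci)) ^ m / Kc * F)"
    using x c Kc by (simp add: field_simps power_divide)
  finally show ?thesis .
qed

lemma Pc_lemma:
  assumes fin: "finite I" and cq: "\<forall>q\<in>I. 0 < c q \<and> c q < 1" and inj: "inj_on c I" and i: "i \<in> I"
  shows "(\<Prod>q\<in>I-{i}. ((1 - c q) / (c i - c q)) ^ n q) = 1 / ((1 - c i) ^ sum n (I-{i}) * Kc I (dd c) n i)"
proof -
  have f: "((1 - c q) / (c i - c q)) ^ n q = 1 / ((1 - c i) ^ n q * (dd c i - dd c q) ^ n q)" if q: "q \<in> I - {i}" for q
  proof -
    have nz: "1 - c q \<noteq> 0" "1 - c i \<noteq> 0" "c i - c q \<noteq> 0"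
      using cq q i inj by (auto dest: inj_onD)
    have "dd c i - dd c q = (c i * (1 - c q) - c q * (1 - c i)) / ((1 - c i) * (1 - c q))"
      unfolding dd_def using nz by (simp add: diff_frac_eq)
    also have "c i * (1 - c q) - c q * (1 - c i) = c i - c q" by (simp add: algebra_simps)
    finally have e: "dd c i - dd c q = (c i - c q) / ((1 - c i) * (1 - c q))" .
    have "(1 - c q) / (c i - c q) = 1 / ((1 - c i) * (dd c i - dd c q))"
    proof -
      have gen: "\<And>a b d::real. a \<noteq> 0 \<Longrightarrow> d \<noteq> 0 \<Longrightarrow> b \<noteq> 0 \<Longrightarrow> d / b = 1 / (a * (b / (a * d)))"
        by simp
      show ?thesis unfolding e by (rule gen[OF nz(2) nz(1) nz(3)])
    qed
    then show ?thesis by (simp add: power_divide power_mult_distrib)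
  qed
  have "(\<Prod>q\<in>I-{i}. ((1 - c q) / (c i - c q)) ^ n q) = (\<Prod>q\<in>I-{i}. 1 / ((1 - c i) ^ n q * (dd c i - dd c q) ^ n q))"
    by (rule prod.cong) (use f in auto)
  also have "\<dots> = 1 / ((\<Prod>q\<in>I-{i}. (1 - c i) ^ n q) * Kc I (dd c) n i)"
    by (simp add: prod_dividef prod.distrib Kc_def)
  also have "(\<Prod>q\<in>I-{i}. (1 - c i) ^ n q) = (1 - c i) ^ sum n (I-{i})"
    by (simp add: power_sum)
  finally show ?thesis .
qed



lemma moment_i:
  fixes p :: nat and \<beta> :: real and c :: "nat \<Rightarrow> real" and n :: "nat \<Rightarrow> nat" and i r :: nat
  assumes b: "\<beta> > 0" and cq: "\<forall>q\<in>{1..p}. 0 < c q \<and> c q < 1" and inj: "inj_on c {1..p}"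
    and i: "i \<in> {1..p}"
  shows "(\<lambda>k. ff r (real k) * poly (Mf p \<beta> c n i) (real k) * meixner_weight \<beta> (c i) k) sums
         (pochhammer \<beta> r / pochhammer \<beta> (msize p n - 1) * rho {1..p} (dd c) n i r)"
proof (cases "n i = 0")
  case True
  then show ?thesis by (simp add: Mf_def rho_def)
next
  case False
  define I where "I = {1..p}"
  define m where "m = n i - 1"
  define N where "N = msize p n"
  define K where "K = sum n (I - {i})"
  define \<gamma> where "\<gamma> = \<beta> + real K"
  define ci where "ci = c i"
  have fin: "finite I" by (simp add: I_def)
  have iI: "i \<in> I" using i by (simp add: I_def)
  have ci: "0 < ci" "ci < 1" using cq i by (auto simp: ci_def)
  have NK: "N = K + m + 1"
  proof -
    have "N = n i + K" unfolding N_def msize_def K_def I_def using i by (simp add: sum.remove)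
    then show ?thesis using False by (simp add: m_def)
  qed
  have gpos: "\<gamma> > 0" using b by (simp add: \<gamma>_def)
  define W where "W l = (\<Prod>q\<in>I-{i}. pochhammer (real (n q)) (l q) / fact (l q) * ee (dd c) i q ^ l q)" for l :: "nat \<Rightarrow> nat"
  define T where "T l = pochhammer (- real m) (sum l I) / pochhammer \<gamma> (sum l I) *
      (pochhammer (\<beta> + real r) (l i) / fact (l i)) * W l" for l :: "nat \<Rightarrow> nat"
  define Mom where "Mom j = pochhammer \<beta> (r + j) * ci ^ r * (1 - ci) powr (- (\<beta> + real r + real j))" for j
  define Pset where "Pset = PiE I (\<lambda>_. {0..<n i})"
  define F where "F = fps_nth (fps_binomial (real r) * Bn I (dd c) n i) m"
  have S1: "(\<lambda>k. ff r (real k) * poly (Mf p \<beta> c n i) (real k) * meixner_weight \<beta> (c i) k) sums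
      (Cpre p \<beta> c n i * (\<Sum>l\<in>Pset. coefl p \<beta> c n i l * Mom (l i)))"
  proof -
    have eqf: "(\<lambda>k. ff r (real k) * poly (Mf p \<beta> c n i) (real k) * meixner_weight \<beta> (c i) k) =
      (\<lambda>k. Cpre p \<beta> c n i * (\<Sum>l\<in>Pset. coefl p \<beta> c n i l *
          (ff r (real k) * pochhammer (real k + \<beta>) (l i) * meixner_weight \<beta> (c i) k)))"
      by (rule ext) (simp add: Mf_def poly_sum poly_pb sum_distrib_left sum_distrib_right mult_ac False Pset_def I_def)
    have "(\<lambda>k. ff r (real k) * pochhammer (real k + \<beta>) (l i) * meixner_weight \<beta> (c i) k) sums Mom (l i)" for l
      unfolding Mom_def ci_def using moment_basic[OF b, of "c i" r "l i"] cq i by auto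
    then have "(\<lambda>k. \<Sum>l\<in>Pset. coefl p \<beta> c n i l *
          (ff r (real k) * pochhammer (real k + \<beta>) (l i) * meixner_weight \<beta> (c i) k)) sums
        (\<Sum>l\<in>Pset. coefl p \<beta> c n i l * Mom (l i))"
      by (intro sums_sum sums_mult)
    then show ?thesis unfolding eqf by (rule sums_mult)
  qed
  have SA: "coefl p \<beta> c n i l * Mom (l i) = pochhammer \<beta> r * ((ci / (1 - ci)) ^ r * (1 - ci) powr (- \<beta>)) * T l"
    if l: "l \<in> Pset" for l
  proof -
    define A where "A = pochhammer (- real m) (sum l I) / pochhammer \<gamma> (sum l I)"
    have c1: "coefl p \<beta> c n i l = A * (1 - ci) ^ l i / fact (l i) * W l"
    proof -
      have e1: "1 - real (n i) = - real m" using False by (simp add: m_def)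
      have e2: "\<beta> + real (msize p n) - real (n i) = \<gamma>" using NK False
        by (simp add: \<gamma>_def N_def[symmetric] m_def)
      have e3: "(\<Prod>q\<in>{1..p}-{i}. pochhammer (real (n q)) (l q) / fact (l q) * ((1 - c i) * c q / (c q - c i)) ^ l q) = W l"
        unfolding W_def I_def
      proof (intro prod.cong refl)
        fix q assume q: "q \<in> {1..p} - {i}"
        have "c q \<noteq> c i" using q i inj by (auto dest: inj_onD)
        then have "(1 - c i) * c q / (c q - c i) = ee (dd c) i q"
          unfolding ee_def dd_def using ee_dd[of "c i" "c q"] cq q i by auto
        then show "pochhammer (real (n q)) (l q) / fact (l q) * ((1 - c i) * c q / (c q - c i)) ^ l q =
            pochhammer (real (n q)) (l q) / fact (l q) * ee (dd c) i q ^ l q" by simp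
      qed
      show ?thesis unfolding coefl_def e1 e2 e3 A_def I_def ci_def by simp
    qed
    have c2: "Mom (l i) = pochhammer \<beta> r * pochhammer (\<beta> + real r) (l i) * ci ^ r * (1 - ci) powr (- (\<beta> + real r + real (l i)))"
      unfolding Mom_def by (simp add: pochhammer_product')
    show ?thesis unfolding c1 c2 T_def A_def[symmetric] by (rule stepA_real[OF ci])
  qed
  have SB: "(\<Sum>l\<in>Pset. T l) = fact m / ((- 1) ^ m * pochhammer \<gamma> m) * F"
  proof -
    have Ps: "Pset = PiE I (\<lambda>_. {..m})"
    proof -
      have "{0..<n i} = {..m}" using False by (auto simp: m_def)
      then show ?thesis unfolding Pset_def by simp
    qed
    have G: "(- 1) ^ m * pochhammer \<gamma> m / fact m * (\<Sum>l\<in>Pset. T l) =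
      (\<Sum>l\<in>PiE (I-{i}) (\<lambda>_. {..m}). if sum l (I-{i}) \<le> m then
        (\<Prod>q\<in>I-{i}. pochhammer (real (n q)) (l q) / fact (l q) * ee (dd c) i q ^ l q) *
        ((\<beta> + real r - \<gamma> - real (sum l (I-{i}))) gchoose (m - sum l (I-{i}))) else 0)"
      unfolding Ps T_def W_def
      by (rule G2[OF fin iI gpos, of m "\<beta> + real r" "\<lambda>q j. pochhammer (real (n q)) j / fact j * ee (dd c) i q ^ j"])
    have P: "F = (\<Sum>l\<in>PiE (I-{i}) (\<lambda>_. {..m}). if sum l (I-{i}) \<le> m then
        (\<Prod>q\<in>I-{i}. pochhammer (real (n q)) (l q) / fact (l q) * ee (dd c) i q ^ l q) *
        ((real r - real (sum n (I-{i})) - real (sum l (I-{i}))) gchoose (m - sum l (I-{i}))) else 0)"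
      unfolding F_def Bn_def by (rule prod_expand) (use fin in auto)
    have eq: "\<beta> + real r - \<gamma> - real x = real r - real (sum n (I-{i})) - real x" for x
      by (simp add: \<gamma>_def K_def)
    have "(- 1) ^ m * pochhammer \<gamma> m / fact m * (\<Sum>l\<in>Pset. T l) = F"
      unfolding G P eq ..
    moreover have "pochhammer \<gamma> m > 0" using gpos by (rule pochhammer_pos)
    ultimately show ?thesis by (simp add: field_simps)
  qed
  have "Cpre p \<beta> c n i * (\<Sum>l\<in>Pset. coefl p \<beta> c n i l * Mom (l i)) =
      Cpre p \<beta> c n i * (pochhammer \<beta> r * ((ci / (1 - ci)) ^ r * (1 - ci) powr (- \<beta>)) *
        (fact m / ((- 1) ^ m * pochhammer \<gamma> m) * F))"
    by (simp add: SA sum_distrib_left[symmetric] SB)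
  also have "\<dots> = pochhammer \<beta> r / pochhammer \<beta> (N - 1) * ((ci / (1 - ci)) ^ r / (ci / (1 - ci)) ^ m / Kc I (dd c) n i * F)"
  proof -
    have Pc: "(\<Prod>q\<in>{1..p}-{i}. ((1 - c q) / (c i - c q)) ^ n q) = 1 / ((1 - ci) ^ K * Kc I (dd c) n i)"
      using Pc_lemma[of I c i n] fin cq inj iI unfolding I_def K_def ci_def by simp
    have Kcnz: "Kc I (dd c) n i \<noteq> 0"
    proof -
      have "dd c i \<noteq> dd c q" if "q \<in> I - {i}" for q
      proof
        assume "dd c i = dd c q"
        then have "c i / (1 - c i) = c q / (1 - c q)" by (simp add: dd_def)
        moreover have "1 - c i > 0" "1 - c q > 0" using cq that i by (auto simp: I_def)
        ultimately have "c i * (1 - c q) = c q * (1 - c i)" by (simp add: field_simps)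
        then have "c i = c q" by (simp add: algebra_simps)
        then show False using inj that i by (auto simp: I_def dest: inj_onD)
      qed
      then show ?thesis unfolding Kc_def using fin by (auto simp: prod_zero_iff)
    qed
    have Cp: "Cpre p \<beta> c n i = (- 1) ^ m * (1 - ci) powr (real N - 1 + \<beta>) / (fact m * pochhammer \<beta> K * ci ^ m) *
       (1 / ((1 - ci) ^ K * Kc I (dd c) n i))"
    proof -
      have NmK: "msize p n - n i = K" using NK False by (simp add: N_def[symmetric] m_def)
      show ?thesis unfolding Cpre_def NmK Pc unfolding N_def[symmetric] m_def[symmetric] ci_def[symmetric] ..
    qed
    show ?thesis unfolding Cp \<gamma>_def
      by (rule stepC[OF ci b NK refl Kcnz])
  qed
  also have "\<dots> = pochhammer \<beta> r / pochhammer \<beta> (msize p n - 1) * rho {1..p} (dd c) n i r"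
    using False by (simp add: rho_def N_def I_def m_def F_def dd_def ci_def)
  finally show ?thesis using S1 by simp
qed



lemma pow_as_ff: "\<exists>\<alpha>. \<alpha> j = 1 \<and> (\<forall>x. x ^ j = (\<Sum>r<Suc j. \<alpha> r * ff r x))"
proof -
  have "monom 1 j = 0 \<or> degree (monom (1::real) j) < Suc j" by (simp add: degree_monom_eq)
  then obtain \<alpha> where a: "monom (1::real) j = (\<Sum>r<Suc j. smult (\<alpha> r) (FF r))"
    using basis_rep[of FF, OF FF_monic] by blast
  have "\<alpha> j = coeff (\<Sum>r<Suc j. smult (\<alpha> r) (FF r)) j"
    using basis_coeff_top[where Bs=FF and n=j and a=\<alpha>, OF FF_monic] by simp
  also have "\<dots> = 1" unfolding a[symmetric] by simp
  finally have "\<alpha> j = 1" .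
  moreover have "x ^ j = (\<Sum>r<Suc j. \<alpha> r * ff r x)" for x
  proof -
    have "x ^ j = poly (monom 1 j) x" by (simp add: poly_monom)
    also have "\<dots> = (\<Sum>r<Suc j. \<alpha> r * ff r x)" unfolding a by (simp add: poly_sum poly_FF)
    finally show ?thesis .
  qed
  ultimately show ?thesis by blast
qed

lemma pow_from_ff:
  fixes Q :: "nat \<Rightarrow> real"
  assumes ff: "\<And>r. r < N \<Longrightarrow> (\<lambda>k. ff r (real k) * Q k) sums (if r = N - 1 then 1 else 0)"
    and j: "j < N"
  shows "(\<lambda>k. real k ^ j * Q k) sums (if j = N - 1 then 1 else 0)"
proof -
  obtain \<alpha> where a: "\<alpha> j = 1" "\<And>x. x ^ j = (\<Sum>r<Suc j. \<alpha> r * ff r x)" using pow_as_ff by blast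
  have "(\<lambda>k. \<Sum>r<Suc j. \<alpha> r * (ff r (real k) * Q k)) sums (\<Sum>r<Suc j. \<alpha> r * (if r = N - 1 then 1 else 0))"
    using ff j by (intro sums_sum sums_mult) auto
  moreover have "(\<lambda>k. \<Sum>r<Suc j. \<alpha> r * (ff r (real k) * Q k)) = (\<lambda>k. real k ^ j * Q k)"
    by (rule ext) (simp only: a(2) sum_distrib_right mult.assoc)
  moreover have "(\<Sum>r<Suc j. \<alpha> r * (if r = N - 1 then 1 else 0)) = (if j = N - 1 then 1 else 0)"
  proof (cases "j = N - 1")
    case True
    have "(\<Sum>r<Suc j. \<alpha> r * (if r = N - 1 then 1 else 0)) = (\<Sum>r\<in>{j}. \<alpha> r * (if r = N - 1 then 1 else 0))"
      by (rule sum.mono_neutral_right) (use True in auto)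
    then show ?thesis using True a(1) by simp
  next
    case False
    then show ?thesis using j by (intro trans[OF sum.neutral]) auto
  qed
  ultimately show ?thesis by simp
qed

lemma ff_from_pow:
  fixes Q :: "nat \<Rightarrow> real"
  assumes pw: "\<And>j. j < N \<Longrightarrow> (\<lambda>k. real k ^ j * Q k) sums 0"
    and r: "r < N"
  shows "(\<lambda>k. ff r (real k) * Q k) sums 0"
proof -
  have "(\<lambda>k. \<Sum>j\<le>r. coeff (FF r) j * (real k ^ j * Q k)) sums (\<Sum>j\<le>r. coeff (FF r) j * 0)"
    using pw r by (intro sums_sum sums_mult) auto
  moreover have "(\<lambda>k. \<Sum>j\<le>r. coeff (FF r) j * (real k ^ j * Q k)) = (\<lambda>k. ff r (real k) * Q k)"
  proof (rule ext)
    fix k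
    have e: "ff r (real k) = (\<Sum>j\<le>r. coeff (FF r) j * real k ^ j)"
      using poly_altdef[of "FF r" "real k"] FF_monic[of r] by (simp add: poly_FF)
    show "(\<Sum>j\<le>r. coeff (FF r) j * (real k ^ j * Q k)) = ff r (real k) * Q k"
      unfolding e sum_distrib_right by (simp only: mult.assoc)
  qed
  ultimately show ?thesis by simp
qed

lemma dd_props:
  assumes cq: "\<forall>q\<in>I. 0 < c q \<and> c q < 1" and inj: "inj_on c I"
  shows "inj_on (dd c) I" "\<forall>q\<in>I. dd c q \<noteq> 0"
proof -
  show "inj_on (dd c) I"
  proof (rule inj_onI)
    fix x y assume x: "x \<in> I" and y: "y \<in> I" and e: "dd c x = dd c y"
    have "1 - c x > 0" "1 - c y > 0" using cq x y by auto
    with e have "c x * (1 - c y) = c y * (1 - c x)" by (simp add: dd_def field_simps)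
    then have "c x = c y" by (simp add: algebra_simps)
    then show "x = y" using inj x y by (auto dest: inj_onD)
  qed
  show "\<forall>q\<in>I. dd c q \<noteq> 0" using cq by (auto simp: dd_def)
qed



lemma Mf_typeI:
  assumes b: "\<beta> > 0" and cq: "\<forall>q\<in>{1..p}. 0 < c q \<and> c q < 1" and inj: "inj_on c {1..p}"
    and N1: "msize p n \<ge> 1"
  shows "is_typeI p \<beta> c n (Mf p \<beta> c n)"
proof -
  define N where "N = msize p n"
  define Q where "Q k = (\<Sum>i=1..p. poly (Mf p \<beta> c n i) (real k) * meixner_weight \<beta> (c i) k)" for k
  have fin: "finite {1..p::nat}" by simp
  note ddp = dd_props[OF cq inj]
  have ffm: "(\<lambda>k. ff r (real k) * Q k) sums (if r = N - 1 then 1 else 0)" if r: "r < N" for r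
  proof -
    have "(\<lambda>k. \<Sum>i=1..p. ff r (real k) * poly (Mf p \<beta> c n i) (real k) * meixner_weight \<beta> (c i) k) sums
        (\<Sum>i=1..p. pochhammer \<beta> r / pochhammer \<beta> (msize p n - 1) * rho {1..p} (dd c) n i r)"
      by (intro sums_sum moment_i[OF b cq inj]) auto
    moreover have "(\<lambda>k. \<Sum>i=1..p. ff r (real k) * poly (Mf p \<beta> c n i) (real k) * meixner_weight \<beta> (c i) k)
        = (\<lambda>k. ff r (real k) * Q k)"
      by (rule ext) (simp only: Q_def sum_distrib_left mult.assoc)
    moreover have "(\<Sum>i=1..p. pochhammer \<beta> r / pochhammer \<beta> (msize p n - 1) * rho {1..p} (dd c) n i r)
        = (if r = N - 1 then 1 else 0)"
    proof -
      have "(\<Sum>i=1..p. pochhammer \<beta> r / pochhammer \<beta> (msize p n - 1) * rho {1..p} (dd c) n i r)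
          = pochhammer \<beta> r / pochhammer \<beta> (N - 1) * uu {1..p} (dd c) n r"
        by (simp add: uu_def sum_distrib_left N_def)
      also have "uu {1..p} (dd c) n r = (if r = N - 1 then 1 else 0)"
        using uu_main[OF fin ddp, of n N r] r N1 by (simp add: N_def msize_def)
      also have "pochhammer \<beta> (N - 1) > 0" using b by (rule pochhammer_pos)
      then have "pochhammer \<beta> r / pochhammer \<beta> (N - 1) * (if r = N - 1 then 1 else 0) = (if r = N - 1 then 1 else (0::real))"
        by auto
      finally show ?thesis .
    qed
    ultimately show ?thesis by simp
  qed
  have pw: "(\<lambda>k. \<Sum>i=1..p. real k ^ j * poly (Mf p \<beta> c n i) (real k) * meixner_weight \<beta> (c i) k)
      sums (if j = msize p n - 1 then 1 else 0)" if j: "j < msize p n" for j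
  proof -
    have "(\<lambda>k. real k ^ j * Q k) sums (if j = N - 1 then 1 else 0)"
      using pow_from_ff[of N Q j] ffm j by (simp add: N_def)
    moreover have "(\<lambda>k. \<Sum>i=1..p. real k ^ j * poly (Mf p \<beta> c n i) (real k) * meixner_weight \<beta> (c i) k)
        = (\<lambda>k. real k ^ j * Q k)"
      by (rule ext) (simp only: Q_def sum_distrib_left mult.assoc)
    ultimately show ?thesis by (simp add: N_def)
  qed
  have deg: "\<forall>i\<in>{1..p}. (n i = 0 \<longrightarrow> Mf p \<beta> c n i = 0) \<and> (n i \<ge> 1 \<longrightarrow> degree (Mf p \<beta> c n i) \<le> n i - 1)"
    using degree_Mf by (auto simp: Mf_def)
  show ?thesis unfolding is_typeI_def using deg pw by blast
qed



lemma typeI_unique: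
  assumes b: "\<beta> > 0" and cq: "\<forall>q\<in>{1..p}. 0 < c q \<and> c q < 1" and inj: "inj_on c {1..p}"
    and N1: "msize p n \<ge> 1" and M: "is_typeI p \<beta> c n M" and i: "i \<in> {1..p}"
  shows "M i = Mf p \<beta> c n i"
proof -
  define I where "I = {1..p::nat}"
  define N where "N = msize p n"
  have fin: "finite I" by (simp add: I_def)
  note Mf = Mf_typeI[OF b cq inj N1]
  note ddp = dd_props[OF cq inj]
  define D where "D q = M q - Mf p \<beta> c n q" for q
  define Q where "Q k = (\<Sum>q\<in>I. poly (D q) (real k) * meixner_weight \<beta> (c q) k)" for k
  have pw: "(\<lambda>k. real k ^ j * Q k) sums 0" if j: "j < N" for j
  proof -
    have s1: "(\<lambda>k. \<Sum>i=1..p. real k ^ j * poly (M i) (real k) * meixner_weight \<beta> (c i) k)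
      sums (if j = msize p n - 1 then 1 else 0)" using M j unfolding is_typeI_def N_def by blast
    have s2: "(\<lambda>k. \<Sum>i=1..p. real k ^ j * poly (Mf p \<beta> c n i) (real k) * meixner_weight \<beta> (c i) k)
      sums (if j = msize p n - 1 then 1 else 0)" using Mf j unfolding is_typeI_def N_def by blast
    have "(\<lambda>k. (\<Sum>i=1..p. real k ^ j * poly (M i) (real k) * meixner_weight \<beta> (c i) k) -
        (\<Sum>i=1..p. real k ^ j * poly (Mf p \<beta> c n i) (real k) * meixner_weight \<beta> (c i) k)) sums
        ((if j = msize p n - 1 then 1 else 0) - (if j = msize p n - 1 then 1 else 0))"
      by (rule sums_diff[OF s1 s2])
    moreover have "(\<lambda>k. (\<Sum>i=1..p. real k ^ j * poly (M i) (real k) * meixner_weight \<beta> (c i) k) -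
        (\<Sum>i=1..p. real k ^ j * poly (Mf p \<beta> c n i) (real k) * meixner_weight \<beta> (c i) k)) =
        (\<lambda>k. real k ^ j * Q k)"
      by (rule ext) (simp add: Q_def I_def D_def sum_subtractf[symmetric] sum_distrib_left algebra_simps)
    ultimately show ?thesis by simp
  qed
  have ffz: "(\<lambda>k. ff r (real k) * Q k) sums 0" if r: "r < N" for r
    using ff_from_pow[of N Q r] pw r by blast
  have degD: "D q = 0 \<or> degree (D q) < n q" if q: "q \<in> I" for q
  proof (cases "n q = 0")
    case True
    then have "M q = 0" "Mf p \<beta> c n q = 0" using M Mf q unfolding is_typeI_def I_def by auto
    then show ?thesis by (simp add: D_def)
  next
    case False
    then have "degree (M q) \<le> n q - 1" "degree (Mf p \<beta> c n q) \<le> n q - 1"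
      using M Mf q unfolding is_typeI_def I_def by auto
    then have "degree (D q) \<le> n q - 1" unfolding D_def by (metis degree_diff_le)
    then show ?thesis using False by arith
  qed
  have "\<forall>q\<in>I. \<exists>a. D q = (\<Sum>m<n q. smult (a m) (pb \<beta> m))"
    using degD basis_rep[of "pb \<beta>", OF pb_monic] by blast
  then obtain a where a: "\<And>q. q \<in> I \<Longrightarrow> D q = (\<Sum>m<n q. smult (a q m) (pb \<beta> m))"
    by metis
  define Ph where "Ph q = (\<Sum>m<n q. smult (a q m * ((1 - c q) powr (- \<beta>) / (1 - c q) ^ m)) (pb \<beta> m))" for q
  have fmv: "(\<lambda>k. ff r (real k) * Q k) sums (pochhammer \<beta> r * (\<Sum>q\<in>I. dd c q ^ r * poly (Ph q) (real r)))" for r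
  proof -
    have t: "(\<lambda>k. ff r (real k) * pochhammer (real k + \<beta>) m * meixner_weight \<beta> (c q) k) sums
      (pochhammer \<beta> r * (dd c q ^ r * ((1 - c q) powr (- \<beta>) / (1 - c q) ^ m * pochhammer (real r + \<beta>) m)))"
      if q: "q \<in> I" for q m
    proof -
      have c: "0 < c q" "c q < 1" using cq q by (auto simp: I_def)
      have x: "0 < 1 - c q" using c by simp
      have "pochhammer \<beta> (r + m) * c q ^ r * (1 - c q) powr (- (\<beta> + real r + real m)) =
         pochhammer \<beta> r * (dd c q ^ r * ((1 - c q) powr (- \<beta>) / (1 - c q) ^ m * pochhammer (real r + \<beta>) m))"
        unfolding powr_split[OF x] pochhammer_product' dd_def using x
        by (simp add: field_simps power_divide)
      then show ?thesis using moment_basic[OF b c, of r m] by simp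
    qed
    have "(\<lambda>k. \<Sum>q\<in>I. \<Sum>m<n q. a q m * (ff r (real k) * pochhammer (real k + \<beta>) m * meixner_weight \<beta> (c q) k)) sums
      (\<Sum>q\<in>I. \<Sum>m<n q. a q m * (pochhammer \<beta> r * (dd c q ^ r * ((1 - c q) powr (- \<beta>) / (1 - c q) ^ m * pochhammer (real r + \<beta>) m))))"
      using t by (intro sums_sum sums_mult) auto
    moreover have "(\<lambda>k. \<Sum>q\<in>I. \<Sum>m<n q. a q m * (ff r (real k) * pochhammer (real k + \<beta>) m * meixner_weight \<beta> (c q) k))
       = (\<lambda>k. ff r (real k) * Q k)"
    proof (rule ext)
      fix k
      have "poly (D q) (real k) = (\<Sum>m<n q. a q m * pochhammer (real k + \<beta>) m)" if "q \<in> I" for q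
        using a[OF that] by (simp add: poly_sum poly_pb)
      then show "(\<Sum>q\<in>I. \<Sum>m<n q. a q m * (ff r (real k) * pochhammer (real k + \<beta>) m * meixner_weight \<beta> (c q) k))
         = ff r (real k) * Q k"
        unfolding Q_def by (simp add: sum_distrib_left sum_distrib_right mult_ac)
    qed
    moreover have "(\<Sum>q\<in>I. \<Sum>m<n q. a q m * (pochhammer \<beta> r * (dd c q ^ r * ((1 - c q) powr (- \<beta>) / (1 - c q) ^ m * pochhammer (real r + \<beta>) m))))
      = pochhammer \<beta> r * (\<Sum>q\<in>I. dd c q ^ r * poly (Ph q) (real r))"
      by (simp add: Ph_def poly_sum poly_pb sum_distrib_left mult_ac)
    ultimately show ?thesis by simp
  qed
  have zero: "(\<Sum>q\<in>I. dd c q ^ r * poly (Ph q) (real r)) = 0" if r: "r < N" for r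
  proof -
    have "pochhammer \<beta> r * (\<Sum>q\<in>I. dd c q ^ r * poly (Ph q) (real r)) = 0"
      using sums_unique2[OF fmv ffz[OF r]] .
    moreover have "pochhammer \<beta> r > 0" using b by (rule pochhammer_pos)
    ultimately show ?thesis by simp
  qed
  have degPh: "Ph q = 0 \<or> degree (Ph q) < n q" if "q \<in> I" for q
  proof (cases "n q = 0")
    case True then show ?thesis by (simp add: Ph_def)
  next
    case False
    have "degree (Ph q) \<le> n q - 1" unfolding Ph_def
    proof (rule degree_sum_le)
      fix m assume "m \<in> {..<n q}"
      then have "degree (pb \<beta> m) \<le> n q - 1" using pb_monic[of \<beta> m] by simp
      then show "degree (smult (a q m * ((1 - c q) powr (- \<beta>) / (1 - c q) ^ m)) (pb \<beta> m)) \<le> n q - 1"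
        by (metis degree_smult_le le_trans)
    qed simp
    then show ?thesis using False by arith
  qed
  have sN: "sum n I = N" by (simp add: N_def msize_def I_def)
  have Ph0: "Ph q = 0" if "q \<in> I" for q
    using exppoly_unique[OF fin _ _ _ _ that, of "dd c" Ph n] ddp degPh zero sN by (auto simp: I_def)
  have "D i = 0"
  proof -
    have iI: "i \<in> I" using i by (simp add: I_def)
    have x: "0 < 1 - c i" using cq i by auto
    have "a i m = 0" if m: "m < n i" for m
    proof -
      have "a i m * ((1 - c i) powr (- \<beta>) / (1 - c i) ^ m) = 0"
        using basis_indep[of "pb \<beta>", OF pb_monic, of "\<lambda>m. a i m * ((1 - c i) powr (- \<beta>) / (1 - c i) ^ m)" "n i" m]
          Ph0[OF iI] m unfolding Ph_def by blast
      then show ?thesis using x by simp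
    qed
    then show ?thesis using a[OF iI] by simp
  qed
  then show ?thesis by (simp add: D_def)
qed

theorem mainTheorem9:
  fixes p :: nat and \<beta> :: real and c :: "nat \<Rightarrow> real" and n :: "nat \<Rightarrow> nat" and i :: nat
  assumes "\<beta> > 0"
    and "\<And>q. q \<in> {1..p} \<Longrightarrow> 0 < c q \<and> c q < 1"
    and "inj_on c {1..p}"
    and "i \<in> {1..p}" and "n i \<ge> 1"
  shows "(\<exists>M. is_typeI p \<beta> c n M) \<and>
         (\<forall>M. is_typeI p \<beta> c n M \<longrightarrow>
            (\<forall>x. poly (M i) x = meixner_typeI_formula p \<beta> c n i x))"
proof -
  have cq: "\<forall>q\<in>{1..p}. 0 < c q \<and> c q < 1" using assms(2) by blast
  have N1: "msize p n \<ge> 1"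
  proof -
    have "n i \<le> sum n {1..p}" using assms(4) by (intro member_le_sum) auto
    then show ?thesis using assms(5) by (simp add: msize_def)
  qed
  show ?thesis
  proof
    show "\<exists>M. is_typeI p \<beta> c n M" using Mf_typeI[OF assms(1) cq assms(3) N1] by blast
  next
    show "\<forall>M. is_typeI p \<beta> c n M \<longrightarrow> (\<forall>x. poly (M i) x = meixner_typeI_formula p \<beta> c n i x)"
    proof (intro allI impI)
      fix M x assume M: "is_typeI p \<beta> c n M"
      have "M i = Mf p \<beta> c n i" by (rule typeI_unique[OF assms(1) cq assms(3) N1 M assms(4)])
      then show "poly (M i) x = meixner_typeI_formula p \<beta> c n i x" using poly_Mf[where n=n and i=i, OF assms(5)] by simp
    qed
  qed
qed



end
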